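(* Let $(T_1,\dots,T_k)$ be a tuple of contractions on a Hilbert space $\mathcal{H}$ and $q_{ij}\in\mathbb{T}$ ($1\le i<j\le k$) such that $T_iT_j=q_{ij}T_jT_i$ and $T_iT_j^*=\overline{q_{ij}}\,T_j^*T_i$ for $1\le i<j\le k$. Let $G_{dc}$ be the group described in the context and define $T:G_{dc}\to\mathcal{B}(\mathcal{H})$ by \[ T\Big(\prod_{1\le i<j\le k}q_{ij}^{m_{ij}}s_1^{m_1}\cdots s_k^{m_k}\Big)=\prod_{1\le i<j\le k}q_{ij}^{m_{ij}}\,T_1(m_1)\cdots T_k(m_k), \] where on the right $q_{ij}^{m_{ij}}$ denotes the power of the scalar $q_{ij}$. Then $T$ is positive definite if and only if \[ S(u)=\sum_{v\subseteq u}(-1)^{|v|}T(x^{e(v)})^*T(x^{e(v)})\ge 0 \] for every subset $u$ of $\{1,\dots,k\}$.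
   Context: For a contraction $C$ and $m\in\mathbb{Z}$: $C(m)=C^m$ if $m\ge1$, $C(0)=I$, and $C(m)=(C^* )^{|m|}$ if $m<0$. The group $G_{dc}$ consists of formal elements $x^m=\prod_{1\le i<j\le k}q_{ij}^{m_{ij}}s_1^{m_1}\cdots s_k^{m_k}$ indexed by $m=(m_{ij}\,(1\le i<j\le k);\,m_1,\dots,m_k)$ with all entries in $\mathbb{Z}$, where $s_1,\dots,s_k$ and $q_{ij}$ are indeterminates subject to $s_is_j=q_{ij}s_js_i$, $s_is_j^{-1}=q_{ij}^{-1}s_j^{-1}s_i$ ($i<j$), with the $q_{ij}$ central; concretely the product is $x^mx^n=\prod_{1\le i<j\le k}q_{ij}^{-n_im_j}\,x^{m+n}$ (i.e. the $q_{ij}$-exponents add and are corrected by $-n_im_j$, the $s_l$-exponents add), the identity is $x^0$ and $(x^m)^{-1}=\prod_{i<j}q_{ij}^{-m_im_j}x^{-m}$. For $v\subseteq\{1,\dots,k\}$, $x^{e(v)}=s_1^{e_1}\cdots s_k^{e_k}$ with $e_l=1$ if $l\in v$ and $0$ otherwise (all $q_{ij}$-exponents zero); thus $T(x^{e(v)})$ is the product of the $T_l$, $l\in v$, in increasing order of $l$. A function $T:G\to\mathcal{B}(\mathcal{H})$ on a group $G$ is positive definite if $T(s^{-1})=T(s)^*$ for all $s\in G$ and $\sum_{s,t\in G}\langle T(t^{-1}s)h(s),h(t)\rangle\ge0$ for every finitely supported $h:G\to\mathcal{H}$. *)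

theory Defs
  imports "HOL-Analysis.Analysis" "HOL-Library.Complex_Order"
begin

text \<open>The inner product is linear in the first and conjugate-linear in the second argument;
the norm is the one induced by the inner product; a Hilbert space is a complete one.\<close>

class complex_inner_space = real_normed_vector +
  fixes scaleC :: "complex \<Rightarrow> 'a \<Rightarrow> 'a"
    and cinner :: "'a \<Rightarrow> 'a \<Rightarrow> complex"
  assumes scaleC_add_right: "scaleC a (x + y) = scaleC a x + scaleC a y"
    and scaleC_add_left: "scaleC (a + b) x = scaleC a x + scaleC b x"
    and scaleC_scaleC: "scaleC a (scaleC b x) = scaleC (a * b) x"
    and scaleC_one: "scaleC 1 x = x"
    and scaleR_scaleC: "scaleR r x = scaleC (complex_of_real r) x"
    and cinner_commute: "cinner x y = cnj (cinner y x)"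
    and cinner_add_left: "cinner (x + y) z = cinner x z + cinner y z"
    and cinner_scaleC_left: "cinner (scaleC c x) y = c * cinner x y"
    and cinner_self_ge_zero: "0 \<le> Re (cinner x x)"
    and cinner_self_eq_zero: "cinner x x = 0 \<longleftrightarrow> x = 0"
    and norm_eq_sqrt_cinner: "norm x = sqrt (Re (cinner x x))"

class chilbert_space = complex_inner_space + complete_space

definition clinear_op :: "('h::complex_inner_space \<Rightarrow> 'h) \<Rightarrow> bool" where
  "clinear_op A \<longleftrightarrow> (\<forall>x y. A (x + y) = A x + A y) \<and> (\<forall>c x. A (scaleC c x) = scaleC c (A x))"

definition contraction :: "('h::complex_inner_space \<Rightarrow> 'h) \<Rightarrow> bool" where
  "contraction A \<longleftrightarrow> clinear_op A \<and> (\<forall>x. norm (A x) \<le> norm x)"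

text \<open>Hilbert space adjoint (exists and is unique for bounded operators on Hilbert spaces).\<close>
definition adj :: "('h::complex_inner_space \<Rightarrow> 'h) \<Rightarrow> ('h \<Rightarrow> 'h)" where
  "adj A = (SOME B. \<forall>x y. cinner (A x) y = cinner x (B y))"

definition op_scale :: "complex \<Rightarrow> ('h::complex_inner_space \<Rightarrow> 'h) \<Rightarrow> ('h \<Rightarrow> 'h)" where
  "op_scale c A = (\<lambda>x. scaleC c (A x))"

text \<open>Positive operator: \<open>\<langle>A x, x\<rangle> \<ge> 0\<close> (complex order: real and nonnegative).\<close>
definition op_pos :: "('h::complex_inner_space \<Rightarrow> 'h) \<Rightarrow> bool" where
  "op_pos A \<longleftrightarrow> (\<forall>x. 0 \<le> cinner (A x) x)"

definition op_ipow :: "('h::complex_inner_space \<Rightarrow> 'h) \<Rightarrow> int \<Rightarrow> ('h \<Rightarrow> 'h)" where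
  "op_ipow C m = (if m \<ge> 1 then C ^^ nat m else if m = 0 then id else adj C ^^ nat (- m))"

definition op_prod :: "(nat \<Rightarrow> ('h \<Rightarrow> 'h)) \<Rightarrow> nat list \<Rightarrow> ('h \<Rightarrow> 'h)" where
  "op_prod f xs = foldr (\<lambda>i acc. f i \<circ> acc) xs id"

text \<open>An element \<open>x^m\<close> is encoded by the pair \<open>(mq, ms)\<close> with \<open>mq i j = m_ij\<close> for
\<open>1 \<le> i < j \<le> k\<close> and \<open>ms l = m_l\<close> for \<open>1 \<le> l \<le> k\<close>; all other entries are 0.\<close>
type_synonym gdc = "(nat \<Rightarrow> nat \<Rightarrow> int) \<times> (nat \<Rightarrow> int)"

definition pairs :: "nat \<Rightarrow> (nat \<times> nat) set" where
  "pairs k = {(i, j). 1 \<le> i \<and> i < j \<and> j \<le> k}"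

definition gdc_carrier :: "nat \<Rightarrow> gdc set" where
  "gdc_carrier k = {(mq, ms). (\<forall>i j. (i, j) \<notin> pairs k \<longrightarrow> mq i j = 0) \<and>
                               (\<forall>l. l \<notin> {1..k} \<longrightarrow> ms l = 0)}"

text \<open>\<open>x^m x^n = \<Prod> q_ij^{-n_i m_j} x^{m+n}\<close>.\<close>
definition gdc_mult :: "nat \<Rightarrow> gdc \<Rightarrow> gdc \<Rightarrow> gdc" where
  "gdc_mult k x y = (\<lambda>i j. fst x i j + fst y i j - (if (i, j) \<in> pairs k then snd y i * snd x j else 0),
                     \<lambda>l. snd x l + snd y l)"

definition gdc_one :: gdc where
  "gdc_one = (\<lambda>i j. 0, \<lambda>l. 0)"

text \<open>\<open>(x^m)^{-1} = \<Prod> q_ij^{-m_i m_j} x^{-m}\<close>.\<close>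
definition gdc_inv :: "nat \<Rightarrow> gdc \<Rightarrow> gdc" where
  "gdc_inv k x = (\<lambda>i j. - fst x i j - (if (i, j) \<in> pairs k then snd x i * snd x j else 0),
                  \<lambda>l. - snd x l)"

definition gdc_e :: "nat set \<Rightarrow> gdc" where
  "gdc_e v = (\<lambda>i j. 0, \<lambda>l. if l \<in> v then 1 else 0)"

definition positive_definite ::
  "'g set \<Rightarrow> ('g \<Rightarrow> 'g \<Rightarrow> 'g) \<Rightarrow> ('g \<Rightarrow> 'g) \<Rightarrow> ('g \<Rightarrow> ('h::complex_inner_space \<Rightarrow> 'h)) \<Rightarrow> bool" where
  "positive_definite G gmult ginv T \<longleftrightarrow>
     (\<forall>s\<in>G. T (ginv s) = adj (T s)) \<and>
     (\<forall>F h. finite F \<longrightarrow> F \<subseteq> G \<longrightarrow>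
        0 \<le> (\<Sum>s\<in>F. \<Sum>t\<in>F. cinner (T (gmult (ginv t) s) (h s)) (h t)))"

definition Tdc :: "nat \<Rightarrow> (nat \<Rightarrow> nat \<Rightarrow> complex) \<Rightarrow> (nat \<Rightarrow> ('h::complex_inner_space \<Rightarrow> 'h))
                   \<Rightarrow> gdc \<Rightarrow> ('h \<Rightarrow> 'h)" where
  "Tdc k q Ts x = op_scale (\<Prod>(i, j)\<in>pairs k. q i j powi fst x i j)
                     (op_prod (\<lambda>l. op_ipow (Ts l) (snd x l)) [1..<k+1])"

definition Sop :: "nat \<Rightarrow> (nat \<Rightarrow> nat \<Rightarrow> complex) \<Rightarrow> (nat \<Rightarrow> ('h::complex_inner_space \<Rightarrow> 'h))
                   \<Rightarrow> nat set \<Rightarrow> ('h \<Rightarrow> 'h)" where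
  "Sop k q Ts u = (\<lambda>x. \<Sum>v\<in>Pow u. scaleC ((-1) ^ card v)
                         (adj (Tdc k q Ts (gdc_e v)) (Tdc k q Ts (gdc_e v) x)))"

end

theory Submission
  imports Defs "HOL-Library.Function_Algebras"
begin
section \<open>Inner product basics\<close>

lemma sum_zero_neg: fixes a :: "'a::group_add" shows "a + b = 0 \<Longrightarrow> a = - b"
  by (simp add: eq_neg_iff_add_eq_0)



lemma cinner_add_right: "cinner x (y + z) = cinner x y + cinner x z"
proof -
  have "cinner x (y + z) = cnj (cinner (y + z) x)" by (rule cinner_commute)
  also have "\<dots> = cnj (cinner y x) + cnj (cinner z x)" by (simp add: cinner_add_left)
  also have "\<dots> = cinner x y + cinner x z" using cinner_commute[of x y] cinner_commute[of x z] by simp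
  finally show ?thesis .
qed

lemma cinner_scaleC_right: "cinner x (scaleC c y) = cnj c * cinner x y"
proof -
  have "cinner x (scaleC c y) = cnj (cinner (scaleC c y) x)" by (rule cinner_commute)
  also have "\<dots> = cnj c * cnj (cinner y x)" by (simp add: cinner_scaleC_left)
  also have "\<dots> = cnj c * cinner x y" using cinner_commute[of x y] by simp
  finally show ?thesis .
qed

lemma cinner_zero_left[simp]: "cinner 0 y = 0"
  using cinner_add_left[of 0 0 y] by simp

lemma cinner_zero_right[simp]: "cinner x 0 = 0"
  using cinner_add_right[of x 0 0] by simp

lemma cinner_minus_left: "cinner (- x) y = - cinner x y"
  using cinner_add_left[of "-x" x y] by (simp add: eq_neg_iff_add_eq_0)

lemma cinner_minus_right: "cinner x (- y) = - cinner x y"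
  using cinner_add_right[of x "-y" y] by (simp add: eq_neg_iff_add_eq_0)

lemma cinner_diff_left: "cinner (x - y) z = cinner x z - cinner y z"
  using cinner_add_left[of x "-y" z] cinner_minus_left[of y z] by simp

lemma cinner_diff_right: "cinner x (y - z) = cinner x y - cinner x z"
  using cinner_add_right[of x y "-z"] cinner_minus_right[of x z] by simp

lemma cinner_sum_left: "cinner (\<Sum>i\<in>I. f i) y = (\<Sum>i\<in>I. cinner (f i) y)"
  by (induction I rule: infinite_finite_induct) (auto simp: cinner_add_left)

lemma cinner_sum_right: "cinner x (\<Sum>i\<in>I. f i) = (\<Sum>i\<in>I. cinner x (f i))"
  by (induction I rule: infinite_finite_induct) (auto simp: cinner_add_right)

lemma scaleC_zero_right[simp]: "scaleC c 0 = 0"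
  using scaleC_add_right[of c 0 0] by simp

lemma scaleC_zero_left[simp]: "scaleC 0 x = 0"
  using scaleC_add_left[of 0 0 x] by simp

lemma scaleC_minus_right: "scaleC c (- x) = - scaleC c x"
  using scaleC_add_right[of c "-x" x] by (simp add: eq_neg_iff_add_eq_0)

lemma scaleC_diff_right: "scaleC c (x - y) = scaleC c x - scaleC c y"
  using scaleC_add_right[of c x "-y"] scaleC_minus_right[of c y] by simp

lemma scaleC_minus_left: "scaleC (- c) x = - scaleC c x"
  using scaleC_add_left[of "-c" c x] by (simp add: eq_neg_iff_add_eq_0)

lemma scaleC_diff_left: "scaleC (a - b) x = scaleC a x - scaleC b x"
  using scaleC_add_left[of a "-b" x] scaleC_minus_left[of b x] by simp

lemma scaleC_sum_right: "scaleC c (\<Sum>i\<in>I. f i) = (\<Sum>i\<in>I. scaleC c (f i))"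
  by (induction I rule: infinite_finite_induct) (auto simp: scaleC_add_right)

lemma scaleC_sum_left: "scaleC (\<Sum>i\<in>I. f i) x = (\<Sum>i\<in>I. scaleC (f i) x)"
  by (induction I rule: infinite_finite_induct) (auto simp: scaleC_add_left)

lemma cinner_self_Im: "Im (cinner x x) = 0"
proof -
  have "Im (cinner x x) = Im (cnj (cinner x x))" using cinner_commute[of x x] by simp
  then show ?thesis by simp
qed

lemma cinner_self_eq: "cinner x x = complex_of_real ((norm x)^2)"
proof -
  have "(norm x)^2 = Re (cinner x x)" using norm_eq_sqrt_cinner[of x] cinner_self_ge_zero[of x] by simp
  then show ?thesis using cinner_self_Im[of x] by (simp add: complex_eq_iff)
qed

lemma norm_sq_cinner: "(norm x)^2 = Re (cinner x x)"
  using cinner_self_eq[of x] by simp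

lemma cinner_self_nonneg: "0 \<le> cinner x x"
  using cinner_self_eq[of x] by (simp add: less_eq_complex_def)

lemma norm_scaleC: "norm (scaleC c x) = cmod c * norm x"
proof -
  have "cinner (scaleC c x) (scaleC c x) = c * cnj c * cinner x x"
    by (simp add: cinner_scaleC_left cinner_scaleC_right)
  then have "(norm (scaleC c x))^2 = Re (c * cnj c * cinner x x)"
    by (simp add: norm_sq_cinner)
  also have "c * cnj c = complex_of_real ((cmod c)^2)" by (rule complex_norm_square[symmetric])
  also have "Re (complex_of_real ((cmod c)^2) * cinner x x) = (cmod c * norm x)^2"
    by (simp add: cinner_self_eq power_mult_distrib)
  finally show ?thesis by (simp add: power2_eq_iff_nonneg)
qed

lemma minus_scaleC: "- x = scaleC (-1) x"
proof -
  have "- x = scaleR (-1) x" by simp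
  also have "\<dots> = scaleC (-1) x" using scaleR_scaleC[of "-1" x] by simp
  finally show ?thesis .
qed

lemma scaleR_is_scaleC: "scaleR r x = scaleC (complex_of_real r) x"
  by (rule scaleR_scaleC)

lemma norm_diff_scaleC_sq:
  "(norm (a - scaleC t b))^2 = (norm a)^2 - 2 * Re (cnj t * cinner a b) + (cmod t)^2 * (norm b)^2"
proof -
  have "cinner (a - scaleC t b) (a - scaleC t b) =
        cinner a a - cnj t * cinner a b - t * cinner b a + t * cnj t * cinner b b"
    by (simp add: cinner_diff_left cinner_diff_right cinner_scaleC_left cinner_scaleC_right algebra_simps)
  moreover have "Re (t * cinner b a) = Re (cnj t * cinner a b)"
  proof -
    have e: "cinner b a = cnj (cinner a b)" by (rule cinner_commute)
    have H: "t * cinner b a = cnj (cnj t * cinner a b)" unfolding e by simp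
    show ?thesis by (simp only: H cnj.sel(1))
  qed
  moreover have "t * cnj t * cinner b b = complex_of_real ((cmod t)^2 * (norm b)^2)"
    by (simp add: complex_norm_square[symmetric] cinner_self_eq)
  ultimately show ?thesis by (simp add: norm_sq_cinner)
qed

lemma cauchy_schwarz: "cmod (cinner x y) \<le> norm x * norm y"
proof (cases "y = 0")
  case True then show ?thesis by simp
next
  case False
  define r where "r = (norm y)^2"
  have r: "r > 0" using False by (simp add: r_def)
  define c where "c = cinner x y"
  define t where "t = c / complex_of_real r"
  have "0 \<le> (norm (x - scaleC t y))^2" by simp
  also have "\<dots> = (norm x)^2 - 2 * Re (cnj t * c) + (cmod t)^2 * r"
    by (simp add: norm_diff_scaleC_sq c_def r_def)
  also have "cnj t * c = complex_of_real ((cmod c)^2 / r)"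
  proof -
    have "cnj t * c = (c * cnj c) / complex_of_real r" by (simp add: t_def)
    also have "\<dots> = complex_of_real ((cmod c)^2) / complex_of_real r" by (simp only: complex_norm_square)
    finally show ?thesis by simp
  qed
  also have "(cmod t)^2 * r = (cmod c)^2 / r"
    using r by (simp add: t_def norm_divide power2_eq_square)
  finally have "(cmod c)^2 / r \<le> (norm x)^2" by simp
  then have "(cmod c)^2 \<le> (norm x)^2 * (norm y)^2" using r by (simp add: r_def field_simps)
  then have "(cmod c)^2 \<le> (norm x * norm y)^2" by (simp add: power_mult_distrib)
  then show ?thesis unfolding c_def by (rule power2_le_imp_le) simp
qed

lemma parallelogram: fixes a :: "'a::complex_inner_space" shows
  "(norm (a + b))^2 + (norm (a - b))^2 = 2 * (norm a)^2 + 2 * (norm b)^2"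
proof -
  have "cinner (a + b) (a + b) + cinner (a - b) (a - b) = 2 * cinner a a + 2 * cinner b b"
    by (simp add: cinner_add_left cinner_add_right cinner_diff_left cinner_diff_right algebra_simps)
  then have "Re (cinner (a + b) (a + b) + cinner (a - b) (a - b)) = Re (2 * cinner a a + 2 * cinner b b)"
    by simp
  then show ?thesis by (simp add: norm_sq_cinner)
qed

lemma cinner_eq_zero_all: "(\<And>z. cinner x z = cinner y z) \<Longrightarrow> x = y"
proof -
  assume h: "\<And>z. cinner x z = cinner y z"
  have "cinner (x - y) (x - y) = 0" using h[of "x - y"] by (simp add: cinner_diff_left)
  then show "x = y" by (simp add: cinner_self_eq_zero)
qed

lemma orth_min:
  fixes w n :: "'h::complex_inner_space"
  assumes h: "\<And>t. norm w \<le> norm (w - scaleC t n)"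
  shows "cinner w n = 0"
proof (cases "n = 0")
  case True then show ?thesis by simp
next
  case False
  define r where "r = (norm n)^2"
  have r: "r > 0" using False by (simp add: r_def)
  define c where "c = cinner w n"
  define t where "t = c / complex_of_real r"
  have "(norm w)^2 \<le> (norm (w - scaleC t n))^2"
    using h[of t] by (simp add: power_mono)
  also have "\<dots> = (norm w)^2 - 2 * Re (cnj t * c) + (cmod t)^2 * r"
    by (simp add: norm_diff_scaleC_sq c_def r_def)
  also have "cnj t * c = complex_of_real ((cmod c)^2 / r)"
  proof -
    have "cnj t * c = (c * cnj c) / complex_of_real r" by (simp add: t_def)
    also have "\<dots> = complex_of_real ((cmod c)^2) / complex_of_real r" by (simp only: complex_norm_square)
    finally show ?thesis by simp
  qed
  also have "(cmod t)^2 * r = (cmod c)^2 / r"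
    using r by (simp add: t_def norm_divide power2_eq_square)
  finally have "(cmod c)^2 / r \<le> 0" by simp
  then have "(cmod c)^2 \<le> 0" using r by (simp add: divide_le_0_iff)
  then show ?thesis unfolding c_def by simp
qed

lemma riesz:
  fixes f :: "'h::chilbert_space \<Rightarrow> complex"
  assumes add: "\<And>x y. f (x + y) = f x + f y"
    and sc: "\<And>c x. f (scaleC c x) = c * f x"
    and bnd: "\<And>x. cmod (f x) \<le> K * norm x"
  shows "\<exists>y. \<forall>x. f x = cinner x y"
proof (cases "\<forall>x. f x = 0")
  case True then show ?thesis by (intro exI[of _ 0]) simp
next
  case False
  then obtain x0 where fx0: "f x0 \<noteq> 0" by blast
  have f0: "f 0 = 0" using sc[of 0 0] by simp
  have fminus: "f (- x) = - f x" for x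
    using sc[of "-1" x] by (simp add: minus_scaleC[symmetric])
  have fdiff: "f (x - y) = f x - f y" for x y
    using add[of x "-y"] fminus[of y] by simp
  have fR: "f (scaleR r x) = complex_of_real r * f x" for r x
    using sc by (simp add: scaleR_scaleC)
  define K1 where "K1 = \<bar>K\<bar> + 1"
  have K1: "K1 > 0" by (simp add: K1_def)
  have bnd1: "cmod (f x) \<le> K1 * norm x" for x
  proof -
    have "K * norm x \<le> K1 * norm x" by (rule mult_right_mono) (auto simp: K1_def)
    then show ?thesis using bnd[of x] by simp
  qed
  define S where "S = (\<lambda>z. norm (x0 - z)) ` {z. f z = 0}"
  define d where "d = Inf S"
  have bdd: "bdd_below S" unfolding S_def by (rule bdd_belowI[of _ 0]) auto
  have Sne: "S \<noteq> {}" unfolding S_def using f0 by auto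
  have d_le: "d \<le> norm (x0 - z)" if "f z = 0" for z
    unfolding d_def by (rule cInf_lower) (use that bdd in \<open>auto simp: S_def\<close>)
  have d0: "0 \<le> d" unfolding d_def by (rule cInf_greatest[OF Sne]) (auto simp: S_def)
  have approx: "\<exists>z. f z = 0 \<and> norm (x0 - z) < d + e" if "e > 0" for e
  proof -
    have "Inf S < d + e" using that by (simp add: d_def)
    from cInf_lessD[OF Sne this] show ?thesis by (auto simp: S_def)
  qed
  have "\<forall>n::nat. \<exists>z. f z = 0 \<and> norm (x0 - z) < d + 1 / real (Suc n)"
    using approx by simp
  then obtain zs where zs: "\<And>n. f (zs n) = 0" "\<And>n. norm (x0 - zs n) < d + 1 / real (Suc n)"
    by metis
  have sqb: "(norm (x0 - zs n))^2 \<le> d^2 + (2 * d + 1) * (1 / real (Suc n))" for n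
  proof -
    define e where "e = 1 / real (Suc n)"
    have e0: "0 < e" "e \<le> 1" by (auto simp: e_def)
    have "(norm (x0 - zs n))^2 \<le> (d + e)^2"
      using zs(2)[of n] by (intro power_mono) (auto simp: e_def)
    also have "\<dots> = d^2 + 2 * d * e + e * e" by (simp add: power2_eq_square algebra_simps)
    also have "e * e \<le> e" using e0 by (simp add: mult_le_cancel_right1)
    then have "d^2 + 2 * d * e + e * e \<le> d^2 + (2 * d + 1) * e" by (simp add: algebra_simps)
    finally show ?thesis by (simp add: e_def)
  qed
  have cest: "(norm (zs m - zs n))^2 \<le> (2 * d + 1) * 2 * (1 / real (Suc m) + 1 / real (Suc n))" for m n
  proof -
    define a where "a = x0 - zs m"
    define b where "b = x0 - zs n"
    define mid where "mid = scaleR (1/2) (zs m + zs n)"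
    have fmid: "f mid = 0" by (simp add: mid_def fR add zs(1))
    have ab: "a + b = scaleR 2 (x0 - mid)"
      by (simp add: a_def b_def mid_def scaleR_diff_right scaleR_add_right scaleR_2 algebra_simps)
    have nab: "norm (a + b) = 2 * norm (x0 - mid)" by (simp add: ab)
    have "2 * d \<le> norm (a + b)" using d_le[OF fmid] nab by simp
    then have "4 * d^2 \<le> (norm (a + b))^2"
      using d0 by (metis power2_eq_square power_mono mult_nonneg_nonneg zero_le_numeral power_mult_distrib
        numeral_Bit0 numeral_One power2_eq_square mult_2 one_add_one)
    moreover have "(norm (a + b))^2 + (norm (a - b))^2 = 2 * (norm a)^2 + 2 * (norm b)^2"
      by (rule parallelogram)
    moreover have "(norm (a - b))^2 = (norm (zs m - zs n))^2"
      by (simp add: a_def b_def norm_minus_commute)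
    moreover have "(2 * d + 1) * 2 * (1 / real (Suc m) + 1 / real (Suc n)) =
       2 * ((2 * d + 1) * (1 / real (Suc m))) + 2 * ((2 * d + 1) * (1 / real (Suc n)))"
      by (simp add: algebra_simps)
    moreover have "4 * d^2 = 2 * d^2 + 2 * d^2" by simp
    ultimately show ?thesis using sqb[of m] sqb[of n] unfolding a_def[symmetric] b_def[symmetric]
      by linarith
  qed
  have "Cauchy zs"
  proof (rule metric_CauchyI)
    fix e :: real assume e: "0 < e"
    obtain M :: nat where M: "real M > 4 * (2 * d + 1) / e^2" using reals_Archimedean2 by blast
    have "dist (zs m) (zs n) < e" if "m \<ge> M" "n \<ge> M" for m n
    proof -
      have pos: "4 * (2 * d + 1) / e^2 \<ge> 0" using d0 by simp
      have h1: "1 / real (Suc m) \<le> 1 / real (Suc M)" using that by (simp add: frac_le)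
      have h2: "1 / real (Suc n) \<le> 1 / real (Suc M)" using that by (simp add: frac_le)
      have "(norm (zs m - zs n))^2 \<le> (2 * d + 1) * 2 * (2 / real (Suc M))"
      proof -
        have "(2 * d + 1) * 2 * (1 / real (Suc m) + 1 / real (Suc n)) \<le> (2 * d + 1) * 2 * (2 / real (Suc M))"
          using h1 h2 d0 by (intro mult_left_mono) auto
        then show ?thesis using cest[of m n] by linarith
      qed
      also have "\<dots> = 4 * (2 * d + 1) / real (Suc M)" by simp
      also have "\<dots> < e^2"
      proof -
        have "4 * (2 * d + 1) / e^2 < real (Suc M)" using M by simp
        then show ?thesis using e by (simp add: field_simps)
      qed
      finally have "(norm (zs m - zs n))^2 < e^2" .
      then have "norm (zs m - zs n) < e" using e by (simp add: power_less_imp_less_base)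
      then show ?thesis by (simp add: dist_norm)
    qed
    then show "\<exists>M. \<forall>m\<ge>M. \<forall>n\<ge>M. dist (zs m) (zs n) < e" by blast
  qed
  then have "convergent zs" by (rule Cauchy_convergent)
  then obtain z where lim: "zs \<longlonglongrightarrow> z" by (auto simp: convergent_def)
  have fz: "f z = 0"
  proof (rule ccontr)
    assume nz: "f z \<noteq> 0"
    then have "cmod (f z) / K1 > 0" using K1 by simp
    from LIMSEQ_D[OF lim this] obtain n where n: "norm (zs n - z) < cmod (f z) / K1" by auto
    have "f (z - zs n) = f z" using zs(1)[of n] by (simp add: fdiff)
    then have "cmod (f z) \<le> K1 * norm (z - zs n)" using bnd1[of "z - zs n"] by simp
    also have "\<dots> < cmod (f z)" using n K1 by (simp add: norm_minus_commute field_simps)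
    finally show False by simp
  qed
  have nw: "norm (x0 - z) \<le> d"
  proof (rule ccontr)
    assume "\<not> norm (x0 - z) \<le> d"
    then have gt: "norm (x0 - z) > d" by simp
    define e where "e = (norm (x0 - z) - d) / 2"
    have e: "e > 0" using gt by (simp add: e_def)
    from LIMSEQ_D[OF lim e] obtain n1 where n1: "\<forall>n\<ge>n1. norm (zs n - z) < e" by auto
    obtain n2 :: nat where n2: "real n2 > 1 / e" using reals_Archimedean2 by blast
    define n where "n = max n1 n2"
    have a: "norm (zs n - z) < e" using n1 by (simp add: n_def)
    have "1 / real (Suc n) < e"
    proof -
      have "1 / e < real (Suc n)" using n2 by (simp add: n_def)
      then show ?thesis using e by (simp add: field_simps)
    qed
    then have b: "norm (x0 - zs n) < d + e" using zs(2)[of n] by simp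
    have "norm (x0 - z) \<le> norm (x0 - zs n) + norm (zs n - z)"
      using norm_triangle_ineq[of "x0 - zs n" "zs n - z"] by simp
    also have "\<dots> < d + 2 * e" using a b by simp
    finally have "norm (x0 - z) < d + 2 * e" .
    moreover have "d + 2 * e = norm (x0 - z)" unfolding e_def by (simp add: field_simps)
    ultimately show False by linarith
  qed
  define w where "w = x0 - z"
  have fw: "f w = f x0" by (simp add: w_def fdiff fz)
  have orth: "cinner w v = 0" if "f v = 0" for v
  proof (rule orth_min)
    fix t
    have "f (z + scaleC t v) = 0" using fz that by (simp add: add sc)
    then have "d \<le> norm (x0 - (z + scaleC t v))" by (rule d_le)
    moreover have "x0 - (z + scaleC t v) = w - scaleC t v" by (simp add: w_def)
    ultimately show "norm w \<le> norm (w - scaleC t v)" using nw by (simp add: w_def)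
  qed
  have ww: "cinner w w \<noteq> 0"
  proof
    assume "cinner w w = 0"
    then have "w = 0" by (simp add: cinner_self_eq_zero)
    then show False using fw fx0 f0 by simp
  qed
  define y where "y = scaleC (cnj (f w / cinner w w)) w"
  have "f x = cinner x y" for x
  proof -
    define c where "c = f x / f w"
    have "f (x - scaleC c w) = 0" using fw fx0 by (simp add: fdiff sc c_def)
    then have "cinner w (x - scaleC c w) = 0" by (rule orth)
    then have "cinner (x - scaleC c w) w = 0" by (metis cinner_commute complex_cnj_zero)
    then have "cinner x w = c * cinner w w" by (simp add: cinner_diff_left cinner_scaleC_left)
    then show ?thesis using ww fw fx0 by (simp add: y_def cinner_scaleC_right c_def)
  qed
  then show ?thesis by blast
qed

section \<open>Bounded operators and adjoints\<close>

definition bop :: "('h::complex_inner_space \<Rightarrow> 'h) \<Rightarrow> bool" where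
  "bop A \<longleftrightarrow> clinear_op A \<and> (\<exists>K. \<forall>x. norm (A x) \<le> K * norm x)"

lemma clinear_add: "clinear_op A \<Longrightarrow> A (x + y) = A x + A y"
  by (simp add: clinear_op_def)
lemma clinear_scaleC: "clinear_op A \<Longrightarrow> A (scaleC c x) = scaleC c (A x)"
  by (simp add: clinear_op_def)
lemma clinear_zero: "clinear_op A \<Longrightarrow> A 0 = 0"
  using clinear_scaleC[of A 0 0] by simp
lemma clinear_minus: "clinear_op A \<Longrightarrow> A (- x) = - A x"
  using clinear_scaleC[of A "-1" x] by (simp add: minus_scaleC[symmetric])
lemma clinear_diff: "clinear_op A \<Longrightarrow> A (x - y) = A x - A y"
  using clinear_add[of A x "-y"] clinear_minus[of A y] by simp
lemma clinear_sum: "clinear_op A \<Longrightarrow> A (\<Sum>i\<in>I. f i) = (\<Sum>i\<in>I. A (f i))"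
  by (induction I rule: infinite_finite_induct) (auto simp: clinear_add clinear_zero)

lemma bop_clinear: "bop A \<Longrightarrow> clinear_op A" by (simp add: bop_def)

lemma cinner_eq_right: "(\<And>z. cinner z x = cinner z y) \<Longrightarrow> x = y"
  by (metis cinner_commute cinner_eq_zero_all)

lemma adj_exists:
  fixes A :: "'h::chilbert_space \<Rightarrow> 'h"
  assumes "bop A"
  shows "\<exists>B. \<forall>x y. cinner (A x) y = cinner x (B y)"
proof -
  from assms obtain K where K: "\<And>x. norm (A x) \<le> K * norm x" and lin: "clinear_op A"
    by (auto simp: bop_def)
  have "\<exists>b. \<forall>x. cinner (A x) y = cinner x b" for y
  proof (rule riesz[where K = "K * norm y"])
    fix x x' show "cinner (A (x + x')) y = cinner (A x) y + cinner (A x') y"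
      by (simp add: clinear_add[OF lin] cinner_add_left)
  next
    fix c x show "cinner (A (scaleC c x)) y = c * cinner (A x) y"
      by (simp add: clinear_scaleC[OF lin] cinner_scaleC_left)
  next
    fix x
    have "cmod (cinner (A x) y) \<le> norm (A x) * norm y" by (rule cauchy_schwarz)
    also have "\<dots> \<le> K * norm x * norm y" by (rule mult_right_mono[OF K]) simp
    finally show "cmod (cinner (A x) y) \<le> K * norm y * norm x" by (simp add: algebra_simps)
  qed
  then show ?thesis by metis
qed

lemma adj_spec:
  fixes A :: "'h::chilbert_space \<Rightarrow> 'h"
  assumes "bop A"
  shows "cinner (A x) y = cinner x (adj A y)"
proof -
  have "\<forall>x y. cinner (A x) y = cinner x (adj A y)"
    unfolding adj_def by (rule someI_ex[OF adj_exists[OF assms]])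
  then show ?thesis by blast
qed

lemma adj_spec2:
  fixes A :: "'h::chilbert_space \<Rightarrow> 'h"
  assumes "bop A"
  shows "cinner (adj A x) y = cinner x (A y)"
  by (metis adj_spec[OF assms] cinner_commute)

lemma adj_unique:
  fixes A :: "'h::chilbert_space \<Rightarrow> 'h"
  assumes "bop A" and "\<And>x y. cinner (A x) y = cinner x (B y)"
  shows "adj A = B"
proof
  fix y show "adj A y = B y"
    by (rule cinner_eq_right) (metis assms adj_spec)
qed

lemma bop_adj:
  fixes A :: "'h::chilbert_space \<Rightarrow> 'h"
  assumes A: "bop A"
  shows "bop (adj A)"
proof -
  from A obtain K where K: "\<And>x. norm (A x) \<le> K * norm x" and lin: "clinear_op A"
    by (auto simp: bop_def)
  have l: "clinear_op (adj A)"
    unfolding clinear_op_def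
  proof (intro conjI allI)
    fix x y show "adj A (x + y) = adj A x + adj A y"
      by (rule cinner_eq_right) (simp add: adj_spec[OF A, symmetric] cinner_add_right)
  next
    fix c x show "adj A (scaleC c x) = scaleC c (adj A x)"
      by (rule cinner_eq_right) (simp add: adj_spec[OF A, symmetric] cinner_scaleC_right)
  qed
  have "norm (adj A y) \<le> K * norm y" for y
  proof (cases "adj A y = 0")
    case True
    show ?thesis
    proof (cases "y = 0")
      case True then show ?thesis using \<open>adj A y = 0\<close> by simp
    next
      case False
      have "K * norm y \<ge> 0"
      proof -
        have "0 \<le> K"
        proof (rule ccontr)
          assume "\<not> 0 \<le> K"
          then have "K * norm y < 0" using False by (simp add: mult_neg_pos)
          moreover have "0 \<le> K * norm y" using K[of y] norm_ge_zero[of "A y"] by linarith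
          ultimately show False by simp
        qed
        then show ?thesis by simp
      qed
      then show ?thesis using \<open>adj A y = 0\<close> by simp
    qed
  next
    case False
    have "(norm (adj A y))^2 = Re (cinner (adj A y) (adj A y))" by (rule norm_sq_cinner)
    also have "cinner (adj A y) (adj A y) = cinner (A (adj A y)) y" by (simp add: adj_spec[OF A])
    also have "Re \<dots> \<le> cmod \<dots>" by (rule complex_Re_le_cmod)
    also have "\<dots> \<le> norm (A (adj A y)) * norm y" by (rule cauchy_schwarz)
    also have "\<dots> \<le> K * norm (adj A y) * norm y" by (rule mult_right_mono[OF K]) simp
    finally have "norm (adj A y) * norm (adj A y) \<le> (K * norm y) * norm (adj A y)"
      by (simp add: power2_eq_square algebra_simps)
    then show ?thesis using False by simp
  qed
  then show ?thesis using l by (auto simp: bop_def)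
qed

lemma adj_adj:
  fixes A :: "'h::chilbert_space \<Rightarrow> 'h"
  assumes A: "bop A"
  shows "adj (adj A) = A"
  by (rule adj_unique[OF bop_adj[OF A]]) (simp add: adj_spec2[OF A])

lemma bop_comp:
  assumes A: "bop A" and B: "bop B"
  shows "bop (A \<circ> B)"
proof -
  from A obtain K where K: "\<And>x. norm (A x) \<le> K * norm x" and la: "clinear_op A"
    by (auto simp: bop_def)
  from B obtain L where L: "\<And>x. norm (B x) \<le> L * norm x" and lb: "clinear_op B"
    by (auto simp: bop_def)
  have K0: "0 \<le> \<bar>K\<bar>" by simp
  have "norm (A (B x)) \<le> \<bar>K\<bar> * \<bar>L\<bar> * norm x" for x
  proof -
    have "norm (A (B x)) \<le> K * norm (B x)" by (rule K)
    also have "\<dots> \<le> \<bar>K\<bar> * norm (B x)" by (simp add: mult_right_mono)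
    also have "\<dots> \<le> \<bar>K\<bar> * (L * norm x)" by (rule mult_left_mono[OF L K0])
    also have "\<dots> \<le> \<bar>K\<bar> * (\<bar>L\<bar> * norm x)" by (intro mult_left_mono mult_right_mono) auto
    finally show ?thesis by (simp add: mult.assoc)
  qed
  moreover have "clinear_op (A \<circ> B)" using la lb by (simp add: clinear_op_def)
  ultimately show ?thesis unfolding bop_def by (metis comp_apply)
qed

lemma adj_comp:
  fixes A :: "'h::chilbert_space \<Rightarrow> 'h"
  assumes A: "bop A" and B: "bop B"
  shows "adj (A \<circ> B) = adj B \<circ> adj A"
  by (rule adj_unique[OF bop_comp[OF A B]]) (simp add: adj_spec[OF A] adj_spec[OF B])

lemma bop_id: "bop id"
  by (auto simp: bop_def clinear_op_def intro: exI[of _ 1])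

lemma adj_id: "adj (id :: 'h::chilbert_space \<Rightarrow> 'h) = id"
  by (rule adj_unique[OF bop_id]) simp

lemma bop_scale:
  assumes A: "bop A" shows "bop (op_scale c A)"
proof -
  from A obtain K where K: "\<And>x. norm (A x) \<le> K * norm x" and la: "clinear_op A"
    by (auto simp: bop_def)
  have "norm (scaleC c (A x)) \<le> (cmod c * K) * norm x" for x
    using mult_left_mono[OF K[of x], of "cmod c"] by (simp add: norm_scaleC mult.assoc)
  moreover have "clinear_op (op_scale c A)"
    using la by (simp add: clinear_op_def op_scale_def scaleC_add_right scaleC_scaleC mult.commute)
  ultimately show ?thesis by (auto simp: bop_def op_scale_def)
qed

lemma adj_scale:
  fixes A :: "'h::chilbert_space \<Rightarrow> 'h"
  assumes A: "bop A"
  shows "adj (op_scale c A) = op_scale (cnj c) (adj A)"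
  by (rule adj_unique[OF bop_scale[OF A]])
     (simp add: op_scale_def cinner_scaleC_left cinner_scaleC_right adj_spec[OF A])

lemma bop_pow: "bop A \<Longrightarrow> bop (A ^^ n)"
  by (induction n) (auto simp: bop_id bop_comp)

lemma adj_pow:
  fixes A :: "'h::chilbert_space \<Rightarrow> 'h"
  assumes A: "bop A"
  shows "adj (A ^^ n) = adj A ^^ n"
proof (induction n)
  case 0 then show ?case by (metis adj_id funpow.simps(1))
next
  case (Suc n)
  have "adj (A ^^ Suc n) = adj (A \<circ> A ^^ n)" by simp
  also have "\<dots> = adj (A ^^ n) \<circ> adj A" by (rule adj_comp[OF A bop_pow[OF A]])
  also have "\<dots> = adj A ^^ n \<circ> adj A" using Suc by simp
  also have "\<dots> = adj A ^^ Suc n" by (rule funpow_Suc_right[symmetric])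
  finally show ?case .
qed

lemma bop_ipow:
  fixes A :: "'h::chilbert_space \<Rightarrow> 'h"
  shows "bop A \<Longrightarrow> bop (op_ipow A m)"
  by (auto simp: op_ipow_def bop_pow bop_id bop_adj)

lemma adj_ipow:
  fixes A :: "'h::chilbert_space \<Rightarrow> 'h"
  assumes A: "bop A"
  shows "adj (op_ipow A m) = op_ipow A (- m)"
proof -
  consider "m \<ge> 1" | "m = 0" | "m \<le> -1" by linarith
  then show ?thesis
  proof cases
    case 1 then show ?thesis by (simp add: op_ipow_def adj_pow[OF A])
  next
    case 2
    have e: "op_ipow A m = id" "op_ipow A (-m) = id" using 2 by (auto simp: op_ipow_def)
    show ?thesis by (simp only: e adj_id)
  next
    case 3 then show ?thesis
      by (simp add: op_ipow_def adj_pow[OF bop_adj[OF A]] adj_adj[OF A])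
  qed
qed

lemma op_prod_Nil[simp]: "op_prod f [] = id"
  by (simp add: op_prod_def)
lemma op_prod_Cons[simp]: "op_prod f (x # xs) = f x \<circ> op_prod f xs"
  by (simp add: op_prod_def)
lemma op_prod_append: "op_prod f (xs @ ys) = op_prod f xs \<circ> op_prod f ys"
  by (induction xs) auto

lemma bop_prod: "(\<And>i. i \<in> set xs \<Longrightarrow> bop (f i)) \<Longrightarrow> bop (op_prod f xs)"
  by (induction xs) (auto simp: bop_id bop_comp)

lemma contraction_bop: "contraction A \<Longrightarrow> bop A"
  by (auto simp: contraction_def bop_def intro: exI[of _ 1])

lemma op_scale_apply: "op_scale c A x = scaleC c (A x)"
  by (simp add: op_scale_def)

lemma comp_scale_right: "clinear_op A \<Longrightarrow> A \<circ> op_scale c B = op_scale c (A \<circ> B)"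
  by (auto simp: op_scale_def clinear_scaleC)

lemma comp_scale_left: "op_scale c A \<circ> B = op_scale c (A \<circ> B)"
  by (auto simp: op_scale_def)

lemma scale_scale: "op_scale c (op_scale d A) = op_scale (c * d) A"
  by (auto simp: op_scale_def scaleC_scaleC)

lemma scale_one[simp]: "op_scale 1 A = A"
  by (auto simp: op_scale_def scaleC_one)

lemma scale_inv:
  assumes "X = op_scale c Y" "c \<noteq> 0"
  shows "Y = op_scale (inverse c) X"
  using assms by (simp add: scale_scale)

lemma clinear_pow: "clinear_op A \<Longrightarrow> clinear_op (A ^^ n)"
  by (induction n) (auto simp: clinear_op_def)

lemma comm_pow_right:
  assumes la: "clinear_op A" and lb: "clinear_op B" and c: "A \<circ> B = op_scale c (B \<circ> A)"
  shows "A \<circ> B ^^ m = op_scale (c ^ m) (B ^^ m \<circ> A)"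
proof (induction m)
  case 0 then show ?case by simp
next
  case (Suc m)
  have "A \<circ> B ^^ Suc m = (A \<circ> B) \<circ> B ^^ m" by (simp add: comp_assoc)
  also have "\<dots> = op_scale c (B \<circ> (A \<circ> B ^^ m))" by (simp add: c comp_scale_left comp_assoc)
  also have "\<dots> = op_scale c (B \<circ> op_scale (c ^ m) (B ^^ m \<circ> A))" by (simp only: Suc)
  also have "\<dots> = op_scale (c ^ Suc m) (B ^^ Suc m \<circ> A)"
    by (simp add: comp_scale_right[OF lb] scale_scale comp_assoc)
  finally show ?case .
qed

lemma comm_pow_left:
  assumes la: "clinear_op A" and lb: "clinear_op B" and c: "A \<circ> B = op_scale c (B \<circ> A)"
  shows "A ^^ n \<circ> B = op_scale (c ^ n) (B \<circ> A ^^ n)"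
proof (induction n)
  case 0 then show ?case by simp
next
  case (Suc n)
  have "A ^^ Suc n \<circ> B = A \<circ> (A ^^ n \<circ> B)" by (simp add: comp_assoc)
  also have "\<dots> = A \<circ> op_scale (c ^ n) (B \<circ> A ^^ n)" by (simp only: Suc)
  also have "\<dots> = op_scale (c ^ n) ((A \<circ> B) \<circ> A ^^ n)" by (simp add: comp_scale_right[OF la] comp_assoc)
  also have "\<dots> = op_scale (c ^ Suc n) (B \<circ> A ^^ Suc n)"
    by (simp add: c comp_scale_left scale_scale comp_assoc mult.commute)
  finally show ?case .
qed

lemma comm_pow_pow:
  assumes la: "clinear_op A" and lb: "clinear_op B" and c: "A \<circ> B = op_scale c (B \<circ> A)"
  shows "A ^^ n \<circ> B ^^ m = op_scale (c ^ (n * m)) (B ^^ m \<circ> A ^^ n)"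
proof -
  have "A \<circ> B ^^ m = op_scale (c ^ m) (B ^^ m \<circ> A)" by (rule comm_pow_right[OF la lb c])
  from comm_pow_left[OF la clinear_pow[OF lb] this, of n]
  show ?thesis by (simp add: power_mult mult.commute)
qed

locale qdc =
  fixes k :: nat and Ts :: "nat \<Rightarrow> ('h::chilbert_space \<Rightarrow> 'h)" and q :: "nat \<Rightarrow> nat \<Rightarrow> complex"
  assumes contr: "\<And>i. i \<in> {1..k} \<Longrightarrow> contraction (Ts i)"
    and circle: "\<And>i j. (i, j) \<in> pairs k \<Longrightarrow> cmod (q i j) = 1"
    and comm: "\<And>i j. (i, j) \<in> pairs k \<Longrightarrow> Ts i \<circ> Ts j = op_scale (q i j) (Ts j \<circ> Ts i)"
    and dcomm: "\<And>i j. (i, j) \<in> pairs k \<Longrightarrow>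
                  Ts i \<circ> adj (Ts j) = op_scale (cnj (q i j)) (adj (Ts j) \<circ> Ts i)"
begin

abbreviation Tp :: "nat \<Rightarrow> int \<Rightarrow> ('h \<Rightarrow> 'h)" where
  "Tp i a \<equiv> op_ipow (Ts i) a"

lemma bT: "i \<in> {1..k} \<Longrightarrow> bop (Ts i)"
  using contr contraction_bop by blast

lemma bTs: "1 \<le> i \<Longrightarrow> i \<le> k \<Longrightarrow> bop (Ts i)"
  using bT by simp

lemma bTp: "i \<in> {1..k} \<Longrightarrow> bop (Tp i a)"
  using bT bop_ipow by blast

lemma q_nz: "(i, j) \<in> pairs k \<Longrightarrow> q i j \<noteq> 0"
  using circle by fastforce

lemma q_cnj: "(i, j) \<in> pairs k \<Longrightarrow> cnj (q i j) = inverse (q i j)"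
proof -
  assume p: "(i, j) \<in> pairs k"
  have "q i j * cnj (q i j) = 1"
    using complex_norm_square[of "q i j"] circle[OF p] by simp
  then show ?thesis by (metis inverse_unique mult.commute)
qed

lemma q_cnj_mult: "(i, j) \<in> pairs k \<Longrightarrow> cnj (q i j) * q i j = 1"
  using q_cnj q_nz by simp

lemma pairs_mem: "(i, j) \<in> pairs k \<Longrightarrow> i \<in> {1..k} \<and> j \<in> {1..k} \<and> i < j"
  by (auto simp: pairs_def)

lemma rel3:
  assumes p: "(i, j) \<in> pairs k"
  shows "adj (Ts i) \<circ> Ts j = op_scale (cnj (q i j)) (Ts j \<circ> adj (Ts i))"
proof -
  have bi: "bop (Ts i)" and bj: "bop (Ts j)" using pairs_mem[OF p] bT by auto
  have "adj (Ts i \<circ> adj (Ts j)) = adj (op_scale (cnj (q i j)) (adj (Ts j) \<circ> Ts i))"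
    using dcomm[OF p] by simp
  then have "Ts j \<circ> adj (Ts i) = op_scale (q i j) (adj (Ts i) \<circ> Ts j)"
    by (simp add: adj_comp adj_scale bi bj bop_adj bop_comp adj_adj)
  from scale_inv[OF this q_nz[OF p]] show ?thesis by (simp add: q_cnj[OF p])
qed

lemma rel4:
  assumes p: "(i, j) \<in> pairs k"
  shows "adj (Ts i) \<circ> adj (Ts j) = op_scale (q i j) (adj (Ts j) \<circ> adj (Ts i))"
proof -
  have bi: "bop (Ts i)" and bj: "bop (Ts j)" using pairs_mem[OF p] bT by auto
  have "adj (Ts i \<circ> Ts j) = adj (op_scale (q i j) (Ts j \<circ> Ts i))"
    using comm[OF p] by simp
  then have "adj (Ts j) \<circ> adj (Ts i) = op_scale (cnj (q i j)) (adj (Ts i) \<circ> adj (Ts j))"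
    by (simp add: adj_comp adj_scale bi bj bop_comp)
  from scale_inv[OF this] show ?thesis using q_nz[OF p] by (simp add: q_cnj[OF p])
qed

lemma pair_comm:
  assumes p: "(i, j) \<in> pairs k"
  shows "Tp i x \<circ> Tp j y = op_scale (q i j powi (x * y)) (Tp j y \<circ> Tp i x)"
proof -
  have bi: "bop (Ts i)" and bj: "bop (Ts j)" using pairs_mem[OF p] bT by auto
  note li = bop_clinear[OF bi] and lj = bop_clinear[OF bj]
  note lai = bop_clinear[OF bop_adj[OF bi]] and laj = bop_clinear[OF bop_adj[OF bj]]
  have qc: "cnj (q i j) = q i j powi (-1)" using q_cnj[OF p] by (simp add: power_int_minus)
  have qq: "q i j = q i j powi 1" by simp
  consider "x = 0" | "y = 0" | "x \<ge> 1" "y \<ge> 1" | "x \<ge> 1" "y \<le> -1" | "x \<le> -1" "y \<ge> 1"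
    | "x \<le> -1" "y \<le> -1" by linarith
  then show ?thesis
  proof cases
    case 1 then show ?thesis by (simp add: op_ipow_def)
  next
    case 2 then show ?thesis by (simp add: op_ipow_def)
  next
    case 3
    from comm_pow_pow[OF li lj comm[OF p], of "nat x" "nat y"]
    have e: "Ts i ^^ nat x \<circ> Ts j ^^ nat y = op_scale ((q i j powi 1) ^ (nat x * nat y)) (Ts j ^^ nat y \<circ> Ts i ^^ nat x)"
      by simp
    have h: "x * y = int (nat x * nat y)" using 3 by simp
    have "q i j powi (x * y) = q i j ^ (nat x * nat y)" by (simp only: h power_int_of_nat)
    then show ?thesis using 3 e by (simp add: op_ipow_def)
  next
    case 4
    from comm_pow_pow[OF li laj dcomm[OF p], of "nat x" "nat (-y)"]
    have e: "Ts i ^^ nat x \<circ> adj (Ts j) ^^ nat (-y) = op_scale ((q i j powi (-1)) ^ (nat x * nat (-y))) (adj (Ts j) ^^ nat (-y) \<circ> Ts i ^^ nat x)"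
      by (simp only: qc)
    have h: "x * y = - 1 * int (nat x * nat (-y))" using 4 by simp
    have "q i j powi (x * y) = (q i j powi (-1)) ^ (nat x * nat (-y))" by (simp only: h power_int_mult power_int_of_nat)
    then show ?thesis using 4 e by (simp add: op_ipow_def)
  next
    case 5
    from comm_pow_pow[OF lai lj rel3[OF p], of "nat (-x)" "nat y"]
    have e: "adj (Ts i) ^^ nat (-x) \<circ> Ts j ^^ nat y = op_scale ((q i j powi (-1)) ^ (nat (-x) * nat y)) (Ts j ^^ nat y \<circ> adj (Ts i) ^^ nat (-x))"
      by (simp only: qc)
    have h: "x * y = - 1 * int (nat (-x) * nat y)" using 5 by simp
    have "q i j powi (x * y) = (q i j powi (-1)) ^ (nat (-x) * nat y)" by (simp only: h power_int_mult power_int_of_nat)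
    then show ?thesis using 5 e by (simp add: op_ipow_def)
  next
    case 6
    from comm_pow_pow[OF lai laj rel4[OF p], of "nat (-x)" "nat (-y)"]
    have e: "adj (Ts i) ^^ nat (-x) \<circ> adj (Ts j) ^^ nat (-y) = op_scale ((q i j powi 1) ^ (nat (-x) * nat (-y))) (adj (Ts j) ^^ nat (-y) \<circ> adj (Ts i) ^^ nat (-x))"
      by simp
    have h: "x * y = int (nat (-x) * nat (-y))" using 6 by simp
    have "q i j powi (x * y) = q i j ^ (nat (-x) * nat (-y))" by (simp only: h power_int_of_nat)
    then show ?thesis using 6 e by (simp add: op_ipow_def)
  qed
qed

end

section \<open>Products of commuting positive operators\<close>

definition sa :: "('h::complex_inner_space \<Rightarrow> 'h) \<Rightarrow> bool" where
  "sa P \<longleftrightarrow> (\<forall>x y. cinner (P x) y = cinner x (P y))"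

lemma cpos_iff: "0 \<le> (z::complex) \<longleftrightarrow> 0 \<le> Re z \<and> Im z = 0"
  by (auto simp: less_eq_complex_def)

primrec csq :: "('h::complex_inner_space \<Rightarrow> 'h) \<Rightarrow> nat \<Rightarrow> ('h \<Rightarrow> 'h)" where
  "csq C 0 = C"
| "csq C (Suc n) = (\<lambda>x. csq C n x - csq C n (csq C n x))"

lemma csq_lin_sa:
  assumes lC: "clinear_op C" and saC: "sa C"
  shows "clinear_op (csq C n) \<and> sa (csq C n)"
proof (induction n)
  case 0 then show ?case using lC saC by simp
next
  case (Suc n)
  then have l: "clinear_op (csq C n)" and s: "sa (csq C n)" by auto
  have "clinear_op (csq C (Suc n))"
    unfolding clinear_op_def csq.simps
  proof (intro conjI allI)
    fix x y show "csq C n (x + y) - csq C n (csq C n (x + y)) =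
      csq C n x - csq C n (csq C n x) + (csq C n y - csq C n (csq C n y))"
      by (simp add: clinear_add[OF l])
  next
    fix c x show "csq C n (scaleC c x) - csq C n (csq C n (scaleC c x)) =
      scaleC c (csq C n x - csq C n (csq C n x))"
      by (simp add: clinear_scaleC[OF l] scaleC_diff_right)
  qed
  moreover have "sa (csq C (Suc n))"
    using s unfolding sa_def by (simp add: cinner_diff_left cinner_diff_right)
  ultimately show ?case by simp
qed

lemma csq_comm:
  assumes lP: "clinear_op P" and c: "\<And>x. P (C x) = C (P x)"
  shows "P (csq C n x) = csq C n (P x)"
proof (induction n arbitrary: x)
  case 0 then show ?case using c by simp
next
  case (Suc n) then show ?case by (simp add: clinear_diff[OF lP])
qed

lemma csq_pos:
  assumes lC: "clinear_op C" and saC: "sa C" and pC: "op_pos C" and pIC: "op_pos (\<lambda>x. x - C x)"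
  shows "op_pos (csq C n) \<and> op_pos (\<lambda>x. x - csq C n x)"
proof (induction n)
  case 0 then show ?case using pC pIC by simp
next
  case (Suc n)
  define B where "B = csq C n"
  have l: "clinear_op B" and s: "sa B" using csq_lin_sa[OF lC saC] by (auto simp: B_def)
  have pB: "op_pos B" and pIB: "op_pos (\<lambda>x. x - B x)" using Suc by (auto simp: B_def)
  have "0 \<le> cinner (B x - B (B x)) x" for x
  proof -
    have "cinner (B x - B (B x)) x = cinner (B x - B (B x)) (B x) + cinner (B (x - B x)) (x - B x)"
      by (simp add: clinear_diff[OF l] cinner_diff_left cinner_diff_right)
    moreover have "0 \<le> cinner (B x - B (B x)) (B x)" using pIB unfolding op_pos_def by blast
    moreover have "0 \<le> cinner (B (x - B x)) (x - B x)" using pB unfolding op_pos_def by blast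
    ultimately show ?thesis by simp
  qed
  moreover have "0 \<le> cinner (x - (B x - B (B x))) x" for x
  proof -
    have "cinner (x - (B x - B (B x))) x = cinner (x - B x) x + cinner (B x) (B x)"
      using s unfolding sa_def by (simp add: cinner_diff_left cinner_diff_right)
    moreover have "0 \<le> cinner (x - B x) x" using pIB unfolding op_pos_def by blast
    moreover have "0 \<le> cinner (B x) (B x)" by (rule cinner_self_nonneg)
    ultimately show ?thesis by simp
  qed
  ultimately show ?case by (simp add: op_pos_def B_def)
qed

lemma csq_tele:
  assumes lC: "clinear_op C" and saC: "sa C" and lP: "clinear_op P" and c: "\<And>x. P (C x) = C (P x)"
  shows "cinner (P (C x)) x = (\<Sum>j<n. cinner (P (csq C j x)) (csq C j x)) + cinner (P (csq C n x)) x"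
proof (induction n)
  case 0 then show ?case by simp
next
  case (Suc n)
  define B where "B = csq C n"
  have s: "sa B" using csq_lin_sa[OF lC saC] by (auto simp: B_def)
  have cb: "P (B y) = B (P y)" for y unfolding B_def by (rule csq_comm[of P C, OF lP c])
  have "cinner (P (B x)) x = cinner (P (B x - B (B x))) x + cinner (P (B (B x))) x"
    by (simp add: clinear_diff[OF lP] cinner_diff_left)
  also have "cinner (P (B (B x))) x = cinner (P (B x)) (B x)"
    using s unfolding sa_def by (simp add: cb)
  finally have "cinner (P (B x)) x = cinner (P (csq C (Suc n) x)) x + cinner (P (B x)) (B x)"
    by (simp add: B_def)
  then show ?case using Suc by (simp add: B_def)
qed

lemma pos_prod:
  fixes P C :: "'h::complex_inner_space \<Rightarrow> 'h"
  assumes bP: "bop P" and saP: "sa P" and pP: "op_pos P"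
    and lC: "clinear_op C" and saC: "sa C" and pC: "op_pos C" and pIC: "op_pos (\<lambda>x. x - C x)"
    and cPC: "\<And>x. P (C x) = C (P x)"
  shows "op_pos (P \<circ> C)"
  unfolding op_pos_def
proof
  fix x
  have lP: "clinear_op P" using bP by (simp add: bop_def)
  from bP obtain K0 where K0: "\<And>y. norm (P y) \<le> K0 * norm y" by (auto simp: bop_def)
  define K where "K = \<bar>K0\<bar>"
  have K: "norm (P y) \<le> K * norm y" for y
  proof -
    have "K0 * norm y \<le> K * norm y" by (rule mult_right_mono) (auto simp: K_def)
    then show ?thesis using K0[of y] by linarith
  qed
  have K_nonneg: "0 \<le> K" by (simp add: K_def)
  define z where "z = cinner (P (C x)) x"
  have imz: "Im z = 0"
  proof -
    have "z = cinner (C x) (P x)" using saP by (simp add: sa_def z_def)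
    also have "\<dots> = cinner x (C (P x))" using saC by (simp add: sa_def)
    also have "\<dots> = cnj z" by (simp add: z_def cPC[symmetric] cinner_commute[of x])
    finally have h: "z = cnj z" .
    have "Im z = - Im z" using arg_cong[OF h, of Im] by simp
    then show ?thesis by linarith
  qed
  have rez: "0 \<le> Re z"
  proof (rule ccontr)
    assume "\<not> 0 \<le> Re z"
    then have a_neg: "Re z < 0" by simp
    define a where "a = Re z"
    define X where "X = (norm x)^2"
    have X0: "0 \<le> X" by (simp add: X_def)
    obtain N :: nat where N: "real N > K^2 * X^2 / a^2" using reals_Archimedean2 by blast
    have Npos: "N > 0"
    proof -
      have h0: "0 \<le> K^2 * X^2 / a^2" by simp
      show ?thesis
      proof (rule ccontr)
        assume "\<not> N > 0"
        then have "real N = 0" by simp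
        then show False using N h0 by linarith
      qed
    qed
    define f where "f j = (norm (csq C j x))^2" for j
    have lin_sa: "\<And>n. clinear_op (csq C n) \<and> sa (csq C n)" using csq_lin_sa[OF lC saC] by blast
    have sum_le: "(\<Sum>j<N. f j) \<le> X"
    proof -
      have idc: "clinear_op (id :: 'h \<Rightarrow> 'h)" by (simp add: clinear_op_def)
      have t: "cinner (C x) x = (\<Sum>j<N. cinner (csq C j x) (csq C j x)) + cinner (csq C N x) x"
        using csq_tele[OF lC saC idc, of x N] by simp
      have "Re (cinner (C x) x) = (\<Sum>j<N. f j) + Re (cinner (csq C N x) x)"
        using t by (simp add: f_def norm_sq_cinner)
      moreover have "0 \<le> Re (cinner (csq C N x) x)"
        using csq_pos[OF lC saC pC pIC, of N] by (simp add: op_pos_def cpos_iff)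
      moreover have "Re (cinner (C x) x) \<le> X"
      proof -
        have "0 \<le> Re (cinner (x - C x) x)" using pIC by (simp add: op_pos_def cpos_iff)
        then show ?thesis by (simp add: cinner_diff_left X_def norm_sq_cinner)
      qed
      ultimately show ?thesis by linarith
    qed
    obtain j where j: "j < N" "\<And>i. i < N \<Longrightarrow> f j \<le> f i"
    proof -
      have fin: "finite (f ` {..<N})" and ne: "f ` {..<N} \<noteq> {}" using Npos by auto
      obtain j where "j \<in> {..<N}" "f j = Min (f ` {..<N})" using Min_in[OF fin ne] by auto
      then show ?thesis using that[of j] Min_le[OF fin] by auto
    qed
    have "real N * f j \<le> X"
    proof -
      have "(\<Sum>i<N. f j) \<le> (\<Sum>i<N. f i)" using j(2) by (intro sum_mono) auto
      then show ?thesis using sum_le by simp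
    qed
    then have fj: "f j \<le> X / real N" using Npos by (simp add: field_simps)
    have "z = (\<Sum>i<j. cinner (P (csq C i x)) (csq C i x)) + cinner (P (csq C j x)) x"
      unfolding z_def by (rule csq_tele[OF lC saC lP cPC])
    then have "Re z = (\<Sum>i<j. Re (cinner (P (csq C i x)) (csq C i x))) + Re (cinner (P (csq C j x)) x)"
      by simp
    moreover have "0 \<le> (\<Sum>i<j. Re (cinner (P (csq C i x)) (csq C i x)))"
      using pP by (intro sum_nonneg) (simp add: op_pos_def cpos_iff)
    moreover have "- Re (cinner (P (csq C j x)) x) \<le> K * norm (csq C j x) * norm x"
    proof -
      have "- Re (cinner (P (csq C j x)) x) \<le> cmod (cinner (P (csq C j x)) x)"
        using abs_Re_le_cmod[of "cinner (P (csq C j x)) x"] by linarith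
      also have "\<dots> \<le> norm (P (csq C j x)) * norm x" by (rule cauchy_schwarz)
      also have "\<dots> \<le> K * norm (csq C j x) * norm x" by (rule mult_right_mono[OF K]) simp
      finally show ?thesis .
    qed
    ultimately have ma: "- a \<le> K * norm (csq C j x) * norm x" by (simp add: a_def)
    have "(- a)^2 \<le> (K * norm (csq C j x) * norm x)^2"
      using ma a_neg by (intro power_mono) (auto simp: a_def)
    then have "a^2 \<le> (K * norm (csq C j x) * norm x)^2" by simp
    also have "\<dots> = K^2 * f j * X" by (simp add: f_def X_def power_mult_distrib)
    also have "\<dots> \<le> K^2 * (X / real N) * X"
      using fj X0 by (intro mult_right_mono mult_left_mono) auto
    finally have "a^2 \<le> K^2 * X^2 / real N" by (simp add: power2_eq_square)
    then have "real N * a^2 \<le> K^2 * X^2" using Npos by (simp add: field_simps)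
    moreover have "K^2 * X^2 < real N * a^2"
    proof -
      have "a^2 > 0" using a_neg by (simp add: a_def)
      then show ?thesis using N by (simp add: field_simps)
    qed
    ultimately show False by simp
  qed
  show "0 \<le> cinner ((P \<circ> C) x) x" using imz rez by (simp add: cpos_iff z_def)
qed

lemma bop_diff:
  assumes A: "bop A" and B: "bop B"
  shows "bop (\<lambda>x. A x - B x)"
proof -
  from A obtain K where K: "\<And>x. norm (A x) \<le> K * norm x" and la: "clinear_op A"
    by (auto simp: bop_def)
  from B obtain L where L: "\<And>x. norm (B x) \<le> L * norm x" and lb: "clinear_op B"
    by (auto simp: bop_def)
  have "norm (A x - B x) \<le> (K + L) * norm x" for x
    using norm_triangle_ineq4[of "A x" "B x"] K[of x] L[of x] by (simp add: algebra_simps)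
  moreover have "clinear_op (\<lambda>x. A x - B x)"
    using la lb unfolding clinear_op_def by (simp add: scaleC_diff_right)
  ultimately show ?thesis by (auto simp: bop_def)
qed

lemma op_prod_cong: "(\<And>l. l \<in> set xs \<Longrightarrow> f l = g l) \<Longrightarrow> op_prod f xs = op_prod g xs"
  by (induction xs) auto

lemma op_prod_ids: "(\<And>l. l \<in> set xs \<Longrightarrow> f l = id) \<Longrightarrow> op_prod f xs = id"
  by (induction xs) auto

lemma op_prod_comm:
  "(\<And>l. l \<in> set xs \<Longrightarrow> X \<circ> f l = f l \<circ> X) \<Longrightarrow> X \<circ> op_prod f xs = op_prod f xs \<circ> X"
proof (induction xs)
  case Nil then show ?case by simp
next
  case (Cons a xs)
  have "X \<circ> op_prod f (a # xs) = (X \<circ> f a) \<circ> op_prod f xs" by (simp add: comp_assoc)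
  also have "\<dots> = f a \<circ> (X \<circ> op_prod f xs)" using Cons.prems[of a] by (simp add: fun_eq_iff)
  also have "\<dots> = op_prod f (a # xs) \<circ> X" using Cons by (simp add: fun_eq_iff)
  finally show ?case .
qed

context qdc
begin

lemma Tp_0: "Tp i 0 = id" by (simp add: op_ipow_def)
lemma Tp_1: "Tp i 1 = Ts i" by (simp add: op_ipow_def)
lemma Tp_m1: "Tp i (-1) = adj (Ts i)" by (simp add: op_ipow_def)

definition wq :: "nat \<Rightarrow> nat \<Rightarrow> complex" where
  "wq i j = (if i < j then q i j else inverse (q j i))"

lemma pair_comm2:
  assumes i: "i \<in> {1..k}" and j: "j \<in> {1..k}" and ij: "i \<noteq> j"
  shows "Tp i x \<circ> Tp j y = op_scale (wq i j powi (x * y)) (Tp j y \<circ> Tp i x)" and "wq i j \<noteq> 0"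
proof -
  show "Tp i x \<circ> Tp j y = op_scale (wq i j powi (x * y)) (Tp j y \<circ> Tp i x)"
  proof (cases "i < j")
    case True
    then have p: "(i, j) \<in> pairs k" using i j by (auto simp: pairs_def)
    show ?thesis using pair_comm[OF p] True by (simp add: wq_def)
  next
    case False
    then have p: "(j, i) \<in> pairs k" using i j ij by (auto simp: pairs_def)
    from scale_inv[OF pair_comm[OF p, of y x]] q_nz[OF p]
    show ?thesis using False by (simp add: wq_def power_int_inverse mult.commute)
  qed
  show "wq i j \<noteq> 0"
    using q_nz i j ij by (auto simp: wq_def pairs_def)
qed

definition Aop :: "nat \<Rightarrow> ('h \<Rightarrow> 'h)" where
  "Aop j = adj (Ts j) \<circ> Ts j"

definition Dop :: "nat \<Rightarrow> ('h \<Rightarrow> 'h)" where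
  "Dop j = (\<lambda>v. v - Aop j v)"

lemma A_comm:
  assumes i: "i \<in> {1..k}" and j: "j \<in> {1..k}" and ij: "i \<noteq> j"
  shows "Tp i x \<circ> Aop j = Aop j \<circ> Tp i x"
proof -
  note pc = pair_comm2[OF i j ij]
  have bj: "bop (Ts j)" using bT j by auto
  have l: "clinear_op (adj (Ts j))" using bop_adj[OF bj] bop_clinear by blast
  have "Tp i x \<circ> Aop j = (Tp i x \<circ> Tp j (-1)) \<circ> Tp j 1" by (simp add: Aop_def Tp_1 Tp_m1 comp_assoc)
  also have "\<dots> = op_scale (wq i j powi (x * -1)) (Tp j (-1) \<circ> (Tp i x \<circ> Tp j 1))"
    by (simp only: pc(1) comp_scale_left comp_assoc)
  also have "\<dots> = op_scale (wq i j powi (x * -1)) (Tp j (-1) \<circ> op_scale (wq i j powi (x * 1)) (Tp j 1 \<circ> Tp i x))"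
    by (simp only: pc(1))
  also have "\<dots> = op_scale (wq i j powi (- x) * wq i j powi x) (Aop j \<circ> Tp i x)"
    using l by (simp add: Tp_m1 Tp_1 comp_scale_right scale_scale Aop_def comp_assoc)
  also have "wq i j powi (- x) * wq i j powi x = 1"
    using pc(2) by (simp add: power_int_minus)
  finally show ?thesis by (simp only: scale_one)
qed

lemma bA: "j \<in> {1..k} \<Longrightarrow> bop (Aop j)"
  unfolding Aop_def using bT bop_adj bop_comp by blast

lemma bD: "j \<in> {1..k} \<Longrightarrow> bop (Dop j)"
  unfolding Dop_def using bA bop_id bop_diff[of id "Aop j"] by (simp add: id_def)

lemma lA: "j \<in> {1..k} \<Longrightarrow> clinear_op (Aop j)"
  using bA bop_clinear by blast

lemma lD: "j \<in> {1..k} \<Longrightarrow> clinear_op (Dop j)"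
  using bD bop_clinear by blast

lemma D_comm:
  assumes i: "i \<in> {1..k}" and j: "j \<in> {1..k}" and ij: "i \<noteq> j"
  shows "Tp i x \<circ> Dop j = Dop j \<circ> Tp i x"
proof
  fix v
  have l: "clinear_op (Tp i x)" using bTp[OF i] bop_clinear by blast
  have "Tp i x (Aop j v) = Aop j (Tp i x v)" using fun_cong[OF A_comm[OF i j ij, of x], of v] by simp
  then show "(Tp i x \<circ> Dop j) v = (Dop j \<circ> Tp i x) v"
    by (simp add: Dop_def clinear_diff[OF l])
qed

lemma sa_A: "j \<in> {1..k} \<Longrightarrow> sa (Aop j)"
  unfolding sa_def Aop_def using bT by (simp add: adj_spec2 adj_spec)

lemma sa_D: "j \<in> {1..k} \<Longrightarrow> sa (Dop j)"
  using sa_A unfolding sa_def Dop_def by (simp add: cinner_diff_left cinner_diff_right)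

lemma pos_A: "j \<in> {1..k} \<Longrightarrow> op_pos (Aop j)"
  unfolding op_pos_def Aop_def using bT by (simp add: adj_spec2 cinner_self_nonneg)

lemma pos_D: "j \<in> {1..k} \<Longrightarrow> op_pos (Dop j)"
proof -
  assume j: "j \<in> {1..k}"
  have b: "bop (Ts j)" using bT j by auto
  have c: "norm (Ts j x) \<le> norm x" for x using contr[OF j] by (simp add: contraction_def)
  show ?thesis unfolding op_pos_def Dop_def Aop_def
  proof
    fix x
    have "cinner (x - (adj (Ts j) \<circ> Ts j) x) x = complex_of_real ((norm x)^2 - (norm (Ts j x))^2)"
      by (simp add: cinner_diff_left adj_spec2[OF b] cinner_self_eq)
    moreover have "(norm (Ts j x))^2 \<le> (norm x)^2" using c[of x] by (simp add: power_mono)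
    ultimately show "0 \<le> cinner (x - (adj (Ts j) \<circ> Ts j) x) x" by (simp add: cpos_iff)
  qed
qed

lemma pos_ID: "j \<in> {1..k} \<Longrightarrow> op_pos (\<lambda>x. x - Dop j x)"
  using pos_A by (simp add: Dop_def op_pos_def)

definition goodS :: "nat set \<Rightarrow> ('h \<Rightarrow> 'h) \<Rightarrow> bool" where
  "goodS S P \<longleftrightarrow> bop P \<and> sa P \<and> op_pos P \<and> (\<forall>i\<in>S. \<forall>x. P \<circ> Tp i x = Tp i x \<circ> P)"

lemma goodS_id: "goodS S id"
  by (simp add: goodS_def bop_id sa_def op_pos_def cinner_self_nonneg)

lemma goodS_D:
  assumes g: "goodS S P" and jS: "j \<in> S" and S: "S \<subseteq> {1..k}"
  shows "goodS (S - {j}) (P \<circ> Dop j)"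
proof -
  have j: "j \<in> {1..k}" using jS S by auto
  have bP: "bop P" and saP: "sa P" and pP: "op_pos P" and cP: "\<And>i x. i \<in> S \<Longrightarrow> P \<circ> Tp i x = Tp i x \<circ> P"
    using g by (auto simp: goodS_def)
  have lP: "clinear_op P" using bP bop_clinear by blast
  have c1: "P (Ts j v) = Ts j (P v)" for v using fun_cong[OF cP[OF jS, of 1], of v] by (simp add: Tp_1)
  have c2: "P (adj (Ts j) v) = adj (Ts j) (P v)" for v using fun_cong[OF cP[OF jS, of "-1"], of v] by (simp add: Tp_m1)
  have cPD: "P (Dop j v) = Dop j (P v)" for v by (simp add: Dop_def Aop_def clinear_diff[OF lP] c1 c2)
  have "bop (P \<circ> Dop j)" using bop_comp[OF bP bD[OF j]] .
  moreover have "sa (P \<circ> Dop j)"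
    using saP sa_D[OF j] unfolding sa_def by (simp add: cPD)
  moreover have "op_pos (P \<circ> Dop j)"
    by (rule pos_prod[OF bP saP pP lD[OF j] sa_D[OF j] pos_D[OF j] pos_ID[OF j] cPD])
  moreover have "(P \<circ> Dop j) \<circ> Tp i x = Tp i x \<circ> (P \<circ> Dop j)" if "i \<in> S - {j}" for i x
  proof -
    have i: "i \<in> {1..k}" "i \<noteq> j" using that S by auto
    have "(P \<circ> Dop j) \<circ> Tp i x = P \<circ> (Tp i x \<circ> Dop j)"
      by (simp add: comp_assoc D_comm[OF i(1) j i(2)])
    also have "\<dots> = Tp i x \<circ> (P \<circ> Dop j)" using cP[of i x] that by (simp add: comp_assoc[symmetric])
    finally show ?thesis .
  qed
  ultimately show ?thesis by (auto simp: goodS_def)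
qed

end

context qdc
begin

definition Ev :: "nat set \<Rightarrow> ('h \<Rightarrow> 'h)" where
  "Ev v = op_prod (\<lambda>l. Tp l (if l \<in> v then 1 else 0)) [1..<k+1]"

lemma Tdc_e: "Tdc k q Ts (gdc_e v) = Ev v"
  by (simp add: Tdc_def gdc_e_def Ev_def)

lemma bEv: "bop (Ev v)"
  unfolding Ev_def by (rule bop_prod) (use bTp in auto)

lemma upt_split3:
  assumes "1 \<le> i" "i \<le> k"
  shows "[1..<k+1] = [1..<i] @ i # [Suc i..<k+1]"
proof -
  have e: "k + 1 = i + (k + 1 - i)" using assms by simp
  have "[1..<k+1] = [1..<i] @ [i..<k+1]" by (metis e upt_add_eq_append assms(1))
  also have "[i..<k+1] = i # [Suc i..<k+1]" by (rule upt_conv_Cons) (use assms in simp)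
  finally show ?thesis .
qed

lemma Ev_split:
  assumes i: "i \<in> {1..k}"
  shows "Ev w = op_prod (\<lambda>l. Tp l (if l \<in> w then 1 else 0)) [1..<i] \<circ>
     (Tp i (if i \<in> w then 1 else 0) \<circ> op_prod (\<lambda>l. Tp l (if l \<in> w then 1 else 0)) [Suc i..<k+1])"
proof -
  have "1 \<le> i" "i \<le> k" using i by auto
  then show ?thesis by (simp only: Ev_def upt_split3 op_prod_append op_prod_Cons)
qed

lemma Ev_insert:
  assumes i: "i \<in> {1..k}" and v: "\<And>l. l \<in> v \<Longrightarrow> i < l"
  shows "Ev (insert i v) = Ts i \<circ> Ev v"
proof -
  have iv: "i \<notin> v" using v by blast
  have a: "op_prod (\<lambda>l. Tp l (if l \<in> w then 1 else 0)) [1..<i] = id" if "w = v \<or> w = insert i v" for w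
  proof (rule op_prod_ids)
    fix l assume "l \<in> set [1..<i]"
    then have "l < i" by simp
    then have "l \<notin> w" using v that by force
    then show "Tp l (if l \<in> w then 1 else 0) = id" by (simp add: Tp_0)
  qed
  have b: "op_prod (\<lambda>l. Tp l (if l \<in> insert i v then 1 else 0)) [Suc i..<k+1] =
           op_prod (\<lambda>l. Tp l (if l \<in> v then 1 else 0)) [Suc i..<k+1]"
    by (rule op_prod_cong) auto
  show ?thesis
    using Ev_split[OF i, of v] Ev_split[OF i, of "insert i v"] a[of v] a[of "insert i v"] b iv
    by (simp add: Tp_0 Tp_1)
qed

lemma A_comm_Ev:
  assumes i: "i \<in> {1..k}" and iv: "i \<notin> v"
  shows "Aop i \<circ> Ev v = Ev v \<circ> Aop i"
  unfolding Ev_def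
proof (rule op_prod_comm)
  fix l assume l: "l \<in> set [1..<k+1]"
  show "Aop i \<circ> Tp l (if l \<in> v then 1 else 0) = Tp l (if l \<in> v then 1 else 0) \<circ> Aop i"
  proof (cases "l = i")
    case True then show ?thesis using iv by (simp add: Tp_0)
  next
    case False
    then show ?thesis using A_comm[of l i] l i by auto
  qed
qed

definition Qv :: "nat set \<Rightarrow> ('h \<Rightarrow> 'h)" where
  "Qv v = adj (Ev v) \<circ> Ev v"

lemma lQ: "clinear_op (Qv v)"
  unfolding Qv_def using bop_comp[OF bop_adj[OF bEv] bEv] bop_clinear by blast

lemma Q_insert:
  assumes i: "i \<in> {1..k}" and v: "\<And>l. l \<in> v \<Longrightarrow> i < l"
  shows "Qv (insert i v) = Qv v \<circ> Aop i"
proof -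
  have iv: "i \<notin> v" using v by blast
  have bi: "bop (Ts i)" using bT i by auto
  have "Qv (insert i v) = adj (Ev v) \<circ> (Aop i \<circ> Ev v)"
    by (simp add: Qv_def Ev_insert[OF i v] adj_comp[OF bi bEv] Aop_def comp_assoc)
  also have "\<dots> = Qv v \<circ> Aop i" by (simp add: A_comm_Ev[OF i iv] Qv_def comp_assoc)
  finally show ?thesis .
qed

lemma Sop_eq: "Sop k q Ts u = (\<lambda>x. \<Sum>v\<in>Pow u. scaleC ((-1) ^ card v) (Qv v x))"
  by (simp add: Sop_def Tdc_e Qv_def)

lemma Sop_insert:
  assumes i: "i \<in> {1..k}" and u: "\<And>l. l \<in> u \<Longrightarrow> i < l" and fu: "finite u"
  shows "Sop k q Ts (insert i u) = Sop k q Ts u \<circ> Dop i"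
proof
  fix x
  have iu: "i \<notin> u" using u by blast
  have disj: "Pow u \<inter> insert i ` Pow u = {}" using iu by auto
  have inj: "inj_on (insert i) (Pow u)" unfolding inj_on_def
  proof (intro ballI impI)
    fix a b assume a: "a \<in> Pow u" and b: "b \<in> Pow u" and e: "insert i a = insert i b"
    have "i \<notin> a" "i \<notin> b" using a b iu by auto
    then have "a = insert i a - {i}" "b = insert i b - {i}" by auto
    then show "a = b" using e by simp
  qed
  have fin: "finite (Pow u)" using fu by simp
  have card: "card (insert i v) = Suc (card v)" if "v \<in> Pow u" for v
  proof -
    have "finite v" using that fu by (auto intro: finite_subset)
    moreover have "i \<notin> v" using that iu by auto
    ultimately show ?thesis by simp
  qed
  have vi: "\<And>l. l \<in> v \<Longrightarrow> i < l" if "v \<in> Pow u" for v using that u by auto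
  have "Sop k q Ts (insert i u) x =
     (\<Sum>v\<in>Pow u. scaleC ((-1) ^ card v) (Qv v x)) +
     (\<Sum>v\<in>insert i ` Pow u. scaleC ((-1) ^ card v) (Qv v x))"
    unfolding Sop_eq Pow_insert by (rule sum.union_disjoint) (use fin disj in auto)
  also have "(\<Sum>v\<in>insert i ` Pow u. scaleC ((-1) ^ card v) (Qv v x)) =
      (\<Sum>v\<in>Pow u. - scaleC ((-1) ^ card v) (Qv v (Aop i x)))"
  proof -
    have "(\<Sum>v\<in>insert i ` Pow u. scaleC ((-1) ^ card v) (Qv v x)) =
      (\<Sum>v\<in>Pow u. scaleC ((-1) ^ card (insert i v)) (Qv (insert i v) x))"
      by (simp add: sum.reindex[OF inj])
    also have "\<dots> = (\<Sum>v\<in>Pow u. - scaleC ((-1) ^ card v) (Qv v (Aop i x)))"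
    proof (rule sum.cong[OF refl])
      fix v assume v: "v \<in> Pow u"
      show "scaleC ((-1) ^ card (insert i v)) (Qv (insert i v) x) = - scaleC ((-1) ^ card v) (Qv v (Aop i x))"
        using card[OF v] Q_insert[OF i vi[OF v]] by (simp add: scaleC_minus_left)
    qed
    finally show ?thesis .
  qed
  also have "(\<Sum>v\<in>Pow u. scaleC ((-1) ^ card v) (Qv v x)) + (\<Sum>v\<in>Pow u. - scaleC ((-1) ^ card v) (Qv v (Aop i x)))
      = (\<Sum>v\<in>Pow u. scaleC ((-1) ^ card v) (Qv v (x - Aop i x)))"
    by (simp add: sum_negf[symmetric] sum.distrib[symmetric] clinear_diff[OF lQ] scaleC_diff_right)
  also have "\<dots> = (Sop k q Ts u \<circ> Dop i) x" by (simp add: Sop_eq Dop_def)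
  finally show "Sop k q Ts (insert i u) x = (Sop k q Ts u \<circ> Dop i) x" .
qed

lemma Sop_empty: "Sop k q Ts {} = id"
proof -
  have e: "Ev {} = id" unfolding Ev_def by (rule op_prod_ids) (simp add: Tp_0)
  have "Qv {} = id" by (simp only: Qv_def e adj_id comp_id)
  then show ?thesis by (simp add: Sop_eq fun_eq_iff scaleC_one)
qed

lemma Sop_good: "u \<subseteq> {1..k} \<Longrightarrow> goodS ({1..k} - u) (Sop k q Ts u)"
proof (induction "card u" arbitrary: u rule: less_induct)
  case less
  show ?case
  proof (cases "u = {}")
    case True then show ?thesis by (simp add: Sop_empty goodS_id)
  next
    case False
    have fu: "finite u" using less.prems finite_subset by blast
    define i where "i = Min u"
    define u0 where "u0 = u - {i}"
    have iu: "i \<in> u" using Min_in[OF fu False] by (simp add: i_def)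
    have ueq: "u = insert i u0" using iu by (auto simp: u0_def)
    have lt: "\<And>l. l \<in> u0 \<Longrightarrow> i < l"
      using Min_le[OF fu] by (fastforce simp: u0_def i_def)
    have i: "i \<in> {1..k}" using iu less.prems by auto
    have fu0: "finite u0" using fu by (simp add: u0_def)
    have c: "card u0 < card u" unfolding u0_def by (rule card_Diff1_less[OF fu iu])
    have g0: "goodS ({1..k} - u0) (Sop k q Ts u0)"
      using less.hyps[OF c] less.prems by (auto simp: u0_def)
    have "goodS (({1..k} - u0) - {i}) (Sop k q Ts u0 \<circ> Dop i)"
      by (rule goodS_D[OF g0]) (use i in \<open>auto simp: u0_def\<close>)
    moreover have "({1..k} - u0) - {i} = {1..k} - u" using ueq by auto
    ultimately show ?thesis using Sop_insert[OF i lt fu0] ueq by simp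
  qed
qed

lemma RHS_true: "u \<subseteq> {1..k} \<Longrightarrow> op_pos (Sop k q Ts u)"
  using Sop_good by (simp add: goodS_def)

end

section \<open>Phase products\<close>

lemma unit_cnj: "cmod z = 1 \<Longrightarrow> cnj z = inverse (z::complex)"
proof -
  assume h: "cmod z = 1"
  have "z * cnj z = 1" using complex_norm_square[of z] h by simp
  then show ?thesis by (metis inverse_unique mult.commute)
qed

lemma pw_mult:
  "(\<And>p. p \<in> F \<Longrightarrow> z p \<noteq> 0) \<Longrightarrow>
   (\<Prod>p\<in>F. z p powi e1 p) * (\<Prod>p\<in>F. z p powi e2 p) = (\<Prod>p\<in>F. (z p :: complex) powi (e1 p + e2 p))"
  unfolding prod.distrib[symmetric] by (rule prod.cong) (auto simp: power_int_add)

lemma pw_pow: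
  "(\<Prod>p\<in>F. z p powi e p) ^ n = (\<Prod>p\<in>F. (z p :: complex) powi (e p * int n))"
  unfolding prod_power_distrib by (rule prod.cong) (auto simp: power_int_power')

lemma pw_inv:
  "inverse (\<Prod>p\<in>F. z p powi e p) = (\<Prod>p\<in>F. (z p :: complex) powi (- e p))"
  unfolding prod_inversef[symmetric] by (rule prod.cong) (auto simp: power_int_minus)

lemma pw_cnj:
  "(\<And>p. p \<in> F \<Longrightarrow> cmod (z p) = 1) \<Longrightarrow>
   cnj (\<Prod>p\<in>F. z p powi e p) = (\<Prod>p\<in>F. (z p :: complex) powi (- e p))"
  unfolding cnj_prod by (rule prod.cong) (auto simp: unit_cnj power_int_inverse power_int_minus)

lemma pw_cong:
  "(\<And>p. p \<in> F \<Longrightarrow> e1 p = e2 p) \<Longrightarrow> (\<Prod>p\<in>F. z p powi e1 p) = (\<Prod>p\<in>F. (z p :: complex) powi e2 p)"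
  by (rule prod.cong) auto

lemma pw_nz: "(\<And>p. p \<in> F \<Longrightarrow> z p \<noteq> 0) \<Longrightarrow> (\<Prod>p\<in>F. (z p :: complex) powi e p) \<noteq> 0"
  by (induction F rule: infinite_finite_induct) (auto simp: power_int_not_zero)
  
lemma pw_unit: "(\<And>p. p \<in> F \<Longrightarrow> cmod (z p) = 1) \<Longrightarrow> cmod (\<Prod>p\<in>F. (z p :: complex) powi e p) = 1"
  by (simp add: prod_norm[symmetric] norm_power_int)

lemma case_prod_powi: "(\<lambda>(i, j). (q i j :: complex) powi e i j) = (\<lambda>p. case_prod q p powi case_prod e p)"
  by auto

lemma pairs_Suc: "pairs (Suc m) = pairs m \<union> (\<lambda>i. (i, Suc m)) ` {1..m}"
  by (auto simp: pairs_def)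

lemma pairs_mono: "m \<le> k \<Longrightarrow> pairs m \<subseteq> pairs k"
  by (auto simp: pairs_def)

lemma finite_pairs: "finite (pairs m)"
  by (rule finite_subset[of _ "{0..m} \<times> {0..m}"]) (auto simp: pairs_def)

lemma prod_pairs_Suc:
  "(\<Prod>p\<in>pairs (Suc m). h p) = (\<Prod>p\<in>pairs m. h p) * (\<Prod>i\<in>{1..m}. h (i, Suc m))"
proof -
  have d: "pairs m \<inter> (\<lambda>i. (i, Suc m)) ` {1..m} = {}" by (auto simp: pairs_def)
  have inj: "inj_on (\<lambda>i. (i, Suc m)) {1..m}" by (auto simp: inj_on_def)
  have "(\<Prod>p\<in>pairs (Suc m). h p) = (\<Prod>p\<in>pairs m. h p) * (\<Prod>p\<in>(\<lambda>i. (i, Suc m)) ` {1..m}. h p)"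
    unfolding pairs_Suc by (rule prod.union_disjoint[OF finite_pairs _ d]) simp
  also have "(\<Prod>p\<in>(\<lambda>i. (i, Suc m)) ` {1..m}. h p) = (\<Prod>i\<in>{1..m}. h (i, Suc m))"
    by (rule prod.reindex_cong[OF inj refl]) simp
  finally show ?thesis .
qed

context qdc
begin

definition Rm :: "nat \<Rightarrow> (nat \<Rightarrow> int) \<Rightarrow> ('h \<Rightarrow> 'h)" where
  "Rm m g = op_prod (\<lambda>l. Tp l (g l)) [1..<m+1]"

lemma Rm_0: "Rm 0 g = id" by (simp add: Rm_def)

lemma Rm_Suc: "Rm (Suc m) g = Rm m g \<circ> Tp (Suc m) (g (Suc m))"
  by (simp add: Rm_def op_prod_append)

lemma bop_Rm: "m \<le> k \<Longrightarrow> bop (Rm m g)"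
  unfolding Rm_def by (rule bop_prod) (use bTp in auto)

lemma lin_Rm: "m \<le> k \<Longrightarrow> clinear_op (Rm m g)"
  using bop_Rm bop_clinear by blast

lemma q_nz2: "i \<in> {1..m} \<Longrightarrow> m < j \<Longrightarrow> j \<le> k \<Longrightarrow> q i j \<noteq> 0"
  by (rule q_nz) (auto simp: pairs_def)

lemma q_unit2: "(i, j) \<in> pairs m \<Longrightarrow> m \<le> k \<Longrightarrow> cmod (q i j) = 1"
  using circle pairs_mono by blast

lemma q_nzp: "(i, j) \<in> pairs m \<Longrightarrow> m \<le> k \<Longrightarrow> q i j \<noteq> 0"
  using q_nz pairs_mono by blast

lemma comm_R:
  assumes "m < j" "j \<le> k"
  shows "Rm m d \<circ> Tp j b = op_scale (\<Prod>i\<in>{1..m}. q i j powi (d i * b)) (Tp j b \<circ> Rm m d)"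
  using assms
proof (induction m)
  case 0 then show ?case by (simp add: Rm_0)
next
  case (Suc m)
  have p: "(Suc m, j) \<in> pairs k" using Suc.prems by (auto simp: pairs_def)
  have lR: "clinear_op (Rm m d)" using Suc.prems by (intro lin_Rm) simp
  have "Rm (Suc m) d \<circ> Tp j b = Rm m d \<circ> (Tp (Suc m) (d (Suc m)) \<circ> Tp j b)"
    by (simp add: Rm_Suc comp_assoc)
  also have "\<dots> = op_scale (q (Suc m) j powi (d (Suc m) * b)) ((Rm m d \<circ> Tp j b) \<circ> Tp (Suc m) (d (Suc m)))"
    by (simp only: pair_comm[OF p] comp_scale_right[OF lR] comp_assoc)
  also have "\<dots> = op_scale (q (Suc m) j powi (d (Suc m) * b))
       (op_scale (\<Prod>i\<in>{1..m}. q i j powi (d i * b)) (Tp j b \<circ> Rm m d) \<circ> Tp (Suc m) (d (Suc m)))"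
    using Suc.prems by (simp only: Suc.IH)
  also have "\<dots> = op_scale (q (Suc m) j powi (d (Suc m) * b) * (\<Prod>i\<in>{1..m}. q i j powi (d i * b)))
                    (Tp j b \<circ> Rm (Suc m) d)"
    by (simp only: comp_scale_left scale_scale Rm_Suc comp_assoc)
  also have "q (Suc m) j powi (d (Suc m) * b) * (\<Prod>i\<in>{1..m}. q i j powi (d i * b)) =
             (\<Prod>i\<in>{1..Suc m}. q i j powi (d i * b))"
    by (simp add: prod.cl_ivl_Suc mult.commute)
  finally show ?case .
qed

lemma Tstar_R:
  assumes "m < j" "j \<le> k"
  shows "Tp j (-1) \<circ> Rm m d = op_scale (\<Prod>i\<in>{1..m}. q i j powi (d i)) (Rm m d \<circ> Tp j (-1))"
proof -
  have nz: "(\<Prod>i\<in>{1..m}. q i j powi (d i * -1)) \<noteq> 0"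
    by (rule pw_nz) (use q_nz2 assms in auto)
  from scale_inv[OF comm_R[OF assms, of d "-1"] nz]
  show ?thesis by (simp add: pw_inv)
qed

lemma adj_Rm:
  assumes "m \<le> k"
  shows "adj (Rm m g) = op_scale (\<Prod>(i, j)\<in>pairs m. q i j powi (- (g i * g j))) (Rm m (\<lambda>l. - g l))"
  using assms
proof (induction m)
  case 0
  have p0: "pairs 0 = {}" by (auto simp: pairs_def)
  show ?case by (simp only: Rm_0 adj_id p0 prod.empty scale_one)
next
  case (Suc m)
  have mk: "m < Suc m" "Suc m \<le> k" using Suc.prems by auto
  have b1: "bop (Rm m g)" using Suc.prems by (intro bop_Rm) simp
  have b2: "bop (Tp (Suc m) (g (Suc m)))" using Suc.prems by (intro bTp) simp
  have l2: "clinear_op (Tp (Suc m) (- g (Suc m)))" using Suc.prems bTp bop_clinear by force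
  define cA where "cA = (\<Prod>(i, j)\<in>pairs m. q i j powi (- (g i * g j)))"
  define cB where "cB = (\<Prod>i\<in>{1..m}. q i (Suc m) powi ((- g i) * (- g (Suc m))))"
  have nzB: "cB \<noteq> 0" unfolding cB_def by (rule pw_nz) (use q_nz2 mk in auto)
  have "adj (Rm (Suc m) g) = Tp (Suc m) (- g (Suc m)) \<circ> op_scale cA (Rm m (\<lambda>l. - g l))"
    using Suc by (simp add: Rm_Suc adj_comp[OF b1 b2] adj_ipow bT cA_def)
  also have "\<dots> = op_scale cA (Tp (Suc m) (- g (Suc m)) \<circ> Rm m (\<lambda>l. - g l))"
    by (rule comp_scale_right[OF l2])
  also have "Tp (Suc m) (- g (Suc m)) \<circ> Rm m (\<lambda>l. - g l) = op_scale (inverse cB) (Rm (Suc m) (\<lambda>l. - g l))"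
    using scale_inv[OF comm_R[OF mk, of "\<lambda>l. - g l" "- g (Suc m)", folded cB_def] nzB]
    by (simp add: Rm_Suc cB_def)
  also have "op_scale cA (op_scale (inverse cB) (Rm (Suc m) (\<lambda>l. - g l))) =
     op_scale (cA * inverse cB) (Rm (Suc m) (\<lambda>l. - g l))" by (simp add: scale_scale)
  also have "cA * inverse cB = (\<Prod>(i, j)\<in>pairs (Suc m). q i j powi (- (g i * g j)))"
    by (simp add: cA_def cB_def pw_inv prod_pairs_Suc)
  finally show ?case .
qed

lemma Tdc_eq: "Tdc k q Ts s = op_scale (\<Prod>(i, j)\<in>pairs k. q i j powi fst s i j) (Rm k (snd s))"
  by (simp add: Tdc_def Rm_def)

lemma Tdc_inv: "Tdc k q Ts (gdc_inv k s) = adj (Tdc k q Ts s)"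
proof -
  obtain a al where s: "s = (a, al)" by (cases s)
  have bR: "bop (Rm k al)" by (rule bop_Rm) simp
  have nz: "\<And>p. p \<in> pairs k \<Longrightarrow> case_prod q p \<noteq> 0" using q_nz by auto
  have un: "\<And>p. p \<in> pairs k \<Longrightarrow> cmod (case_prod q p) = 1" using circle by auto
  have e2: "adj (Tdc k q Ts s) = op_scale (cnj (\<Prod>(i, j)\<in>pairs k. q i j powi a i j) *
            (\<Prod>(i, j)\<in>pairs k. q i j powi (- (al i * al j)))) (Rm k (\<lambda>l. - al l))"
    by (simp add: Tdc_eq s adj_scale[OF bR] adj_Rm scale_scale)
  have e3: "cnj (\<Prod>(i, j)\<in>pairs k. q i j powi a i j) * (\<Prod>(i, j)\<in>pairs k. q i j powi (- (al i * al j)))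
     = (\<Prod>(i, j)\<in>pairs k. q i j powi (- a i j - (if (i, j) \<in> pairs k then al i * al j else 0)))"
  proof -
    have "cnj (\<Prod>(i, j)\<in>pairs k. q i j powi a i j) * (\<Prod>(i, j)\<in>pairs k. q i j powi (- (al i * al j)))
      = (\<Prod>p\<in>pairs k. case_prod q p powi (- case_prod a p)) * (\<Prod>p\<in>pairs k. case_prod q p powi (- case_prod (\<lambda>i j. al i * al j) p))"
      by (simp only: case_prod_powi pw_cnj[OF un]) (simp add: case_prod_beta)
    also have "\<dots> = (\<Prod>p\<in>pairs k. case_prod q p powi (- case_prod a p + - case_prod (\<lambda>i j. al i * al j) p))"
      by (rule pw_mult[OF nz])
    also have "\<dots> = (\<Prod>(i, j)\<in>pairs k. q i j powi (- a i j - (if (i, j) \<in> pairs k then al i * al j else 0)))"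
      by (rule prod.cong) auto
    finally show ?thesis .
  qed
  have e1: "Tdc k q Ts (gdc_inv k s) = op_scale (\<Prod>(i, j)\<in>pairs k. q i j powi (- a i j - (if (i, j) \<in> pairs k then al i * al j else 0))) (Rm k (\<lambda>l. - al l))"
    unfolding s gdc_inv_def Tdc_eq fst_conv snd_conv by (rule refl)
  show ?thesis by (simp only: e1 e2 e3)
qed

end

lemma tele1:
  fixes B :: "'v::ab_group_add \<Rightarrow> 'v \<Rightarrow> complex" and T :: "'v \<Rightarrow> 'v"
    and f :: "nat \<Rightarrow> 'v" and M :: "nat \<Rightarrow> nat \<Rightarrow> complex"
  assumes Badd1: "\<And>x y z. B (x + y) z = B x z + B y z"
    and Badd2: "\<And>x y z. B x (y + z) = B x y + B x z"
    and Bherm: "\<And>x y. B y x = cnj (B x y)"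
    and Tadd: "\<And>x y. T (x + y) = T x + T y"
    and Bpos: "\<And>x. 0 \<le> B x x"
    and Bcontr: "\<And>x. 0 \<le> B x x - B (T x) (T x)"
    and Mdef: "\<And>n n'. n' \<le> n \<Longrightarrow> M n n' = B ((T ^^ (n - n')) (f n)) (f n')"
    and Mherm: "\<And>n n'. M n' n = cnj (M n n')"
  shows "0 \<le> (\<Sum>n\<le>N. \<Sum>n'\<le>N. M n n')"
proof -
  have B0: "B 0 z = 0" for z using Badd1[of 0 0 z] by simp
  have Bsum: "B (\<Sum>i\<in>I. g i) z = (\<Sum>i\<in>I. B (g i) z)" for I and g :: "nat \<Rightarrow> 'v" and z
    by (induction I rule: infinite_finite_induct) (auto simp: B0 Badd1)
  have T0: "T 0 = 0" using Tadd[of 0 0] by simp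
  have Tsum: "T (\<Sum>i\<in>I. g i) = (\<Sum>i\<in>I. T (g i))" for I and g :: "nat \<Rightarrow> 'v"
    by (induction I rule: infinite_finite_induct) (auto simp: T0 Tadd)
  define y where "y L = (\<Sum>m\<in>{L..N}. (T ^^ (m - L)) (f m))" for L
  define Q where "Q L = (\<Sum>n\<in>{L..N}. \<Sum>n'\<in>{L..N}. M n n')" for L
  have main: "0 \<le> Q L - B (y L) (y L)" if "L \<le> N" for L
    using that
  proof (induction L rule: inc_induct)
    case base
    have "Q N = M N N" by (simp add: Q_def)
    also have "\<dots> = B (f N) (f N)" by (simp add: Mdef)
    finally show ?case by (simp add: y_def)
  next
    case (step L)
    define y' where "y' = y (Suc L)"
    have iv: "{L..N} = insert L {Suc L..N}" using step.hyps by auto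
    have yL: "y L = f L + T y'"
    proof -
      have "y L = f L + (\<Sum>m\<in>{Suc L..N}. (T ^^ (m - L)) (f m))"
        unfolding y_def iv by (simp)
      also have "(\<Sum>m\<in>{Suc L..N}. (T ^^ (m - L)) (f m)) = (\<Sum>m\<in>{Suc L..N}. T ((T ^^ (m - Suc L)) (f m)))"
      proof (rule sum.cong[OF refl])
        fix m assume "m \<in> {Suc L..N}"
        then have "L < m" by simp
        then have "m - L = Suc (m - Suc L)" by (simp add: Suc_diff_Suc)
        then show "(T ^^ (m - L)) (f m) = T ((T ^^ (m - Suc L)) (f m))" by simp
      qed
      also have "\<dots> = T y'" by (simp add: y'_def y_def Tsum)
      finally show ?thesis .
    qed
    define S where "S = (\<Sum>n\<in>{Suc L..N}. M n L)"
    have S: "S = B (T y') (f L)"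
    proof -
      have "S = (\<Sum>n\<in>{Suc L..N}. B (T ((T ^^ (n - Suc L)) (f n))) (f L))"
        unfolding S_def
      proof (rule sum.cong[OF refl])
        fix n assume "n \<in> {Suc L..N}"
        then have "n - L = Suc (n - Suc L)" "L \<le> n" by auto
        then show "M n L = B (T ((T ^^ (n - Suc L)) (f n))) (f L)" by (simp add: Mdef)
      qed
      also have "\<dots> = B (T y') (f L)" by (simp add: y'_def y_def Tsum Bsum)
      finally show ?thesis .
    qed
    have S': "(\<Sum>n'\<in>{Suc L..N}. M L n') = cnj S"
      unfolding S_def by (simp add: Mherm[of L] cnj_sum)
    have QL: "Q L = M L L + S + cnj S + Q (Suc L)"
    proof -
      have "Q L = (\<Sum>n\<in>{L..N}. M n L + (\<Sum>n'\<in>{Suc L..N}. M n n'))"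
        unfolding Q_def iv by simp
      also have "\<dots> = (\<Sum>n\<in>{L..N}. M n L) + (\<Sum>n\<in>{L..N}. \<Sum>n'\<in>{Suc L..N}. M n n')"
        by (rule sum.distrib)
      also have "(\<Sum>n\<in>{L..N}. M n L) = M L L + S" unfolding iv S_def by simp
      also have "(\<Sum>n\<in>{L..N}. \<Sum>n'\<in>{Suc L..N}. M n n') = (\<Sum>n'\<in>{Suc L..N}. M L n') + Q (Suc L)"
        unfolding iv Q_def by simp
      finally show ?thesis using S' by (simp add: algebra_simps)
    qed
    have MLL: "M L L = B (f L) (f L)" by (simp add: Mdef)
    have BY: "B (y L) (y L) = B (f L) (f L) + cnj S + S + B (T y') (T y')"
      unfolding yL using S Bherm[of "T y'" "f L"] by (simp add: Badd1 Badd2)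
    have "Q L - B (y L) (y L) = (Q (Suc L) - B (y (Suc L)) (y (Suc L))) + (B y' y' - B (T y') (T y'))"
      unfolding QL BY MLL y'_def by (simp add: algebra_simps)
    moreover have "0 \<le> Q (Suc L) - B (y (Suc L)) (y (Suc L))" by (rule step.IH)
    moreover have "0 \<le> B y' y' - B (T y') (T y')" by (rule Bcontr)
    ultimately show ?case by simp
  qed
  have "Q 0 = (Q 0 - B (y 0) (y 0)) + B (y 0) (y 0)" by simp
  also have "0 \<le> \<dots>" using main[of 0] Bpos[of "y 0"] by (intro add_nonneg_nonneg) auto
  finally show ?thesis by (simp add: Q_def atMost_atLeast0)
qed

lemma pw2_mult:
  assumes "\<And>i j. (i, j) \<in> F \<Longrightarrow> z i j \<noteq> 0"
  shows "(\<Prod>(i, j)\<in>F. z i j powi e1 i j) * (\<Prod>(i, j)\<in>F. z i j powi e2 i j) =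
         (\<Prod>(i, j)\<in>F. (z i j :: complex) powi (e1 i j + e2 i j))"
  unfolding prod.distrib[symmetric]
  by (rule prod.cong[OF refl]) (clarsimp simp: power_int_add assms split: prod.splits)

lemma pw2_cnj:
  assumes "\<And>i j. (i, j) \<in> F \<Longrightarrow> cmod (z i j) = 1"
  shows "cnj (\<Prod>(i, j)\<in>F. z i j powi e i j) = (\<Prod>(i, j)\<in>F. (z i j :: complex) powi (- e i j))"
  unfolding cnj_prod
  by (rule prod.cong[OF refl]) (clarsimp simp: unit_cnj assms power_int_inverse power_int_minus split: prod.splits)

lemma pw2_cong:
  assumes "\<And>i j. (i, j) \<in> F \<Longrightarrow> e1 i j = e2 i j"
  shows "(\<Prod>(i, j)\<in>F. z i j powi e1 i j) = (\<Prod>(i, j)\<in>F. (z i j :: complex) powi e2 i j)"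
  by (rule prod.cong[OF refl]) (clarsimp simp: assms split: prod.splits)

context qdc
begin

definition phi :: "nat \<Rightarrow> (nat \<Rightarrow> int) \<Rightarrow> (nat \<Rightarrow> int) \<Rightarrow> complex" where
  "phi m a b = (\<Prod>(i, j)\<in>pairs m. q i j powi ((a i - b i) * b j))"

definition Kop :: "nat \<Rightarrow> ('h \<Rightarrow> 'h) \<Rightarrow> (nat \<Rightarrow> int) \<Rightarrow> (nat \<Rightarrow> int) \<Rightarrow> ('h \<Rightarrow> 'h)" where
  "Kop m P a b = op_scale (phi m a b) (Rm m (\<lambda>l. a l - b l) \<circ> P)"

lemma goodS_mono: "goodS S P \<Longrightarrow> S' \<subseteq> S \<Longrightarrow> goodS S' P"
  by (auto simp: goodS_def)

lemma P_comm_R: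
  assumes g: "goodS {1..m} P"
  shows "P \<circ> Rm m d = Rm m d \<circ> P"
  unfolding Rm_def
  by (rule op_prod_comm) (use g in \<open>auto simp: goodS_def\<close>)

lemma bop_Kop: "m \<le> k \<Longrightarrow> bop P \<Longrightarrow> bop (Kop m P a b)"
  unfolding Kop_def by (intro bop_scale bop_comp bop_Rm)

lemma lin_Kop: "m \<le> k \<Longrightarrow> bop P \<Longrightarrow> clinear_op (Kop m P a b)"
  using bop_Kop bop_clinear by blast

lemma K_herm:
  assumes mk: "m \<le> k" and g: "goodS {1..m} P"
  shows "cinner (Kop m P a b x) y = cinner x (Kop m P b a y)"
proof -
  define gg where "gg = (\<lambda>l. a l - b l)"
  have bP: "bop P" and saP: "sa P" using g by (auto simp: goodS_def)
  have lP: "clinear_op P" using bP bop_clinear by blast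
  have bR: "bop (Rm m gg)" using mk by (rule bop_Rm)
  define c where "c = (\<Prod>(i, j)\<in>pairs m. q i j powi (- (gg i * gg j)))"
  have mg: "(\<lambda>l. - gg l) = (\<lambda>l. b l - a l)" by (auto simp: gg_def)
  have PR: "P (Rm m (\<lambda>l. b l - a l) y) = Rm m (\<lambda>l. b l - a l) (P y)"
    using fun_cong[OF P_comm_R[OF g]] by simp
  have "cinner (Kop m P a b x) y = phi m a b * cinner (Rm m gg (P x)) y"
    by (simp add: Kop_def op_scale_def cinner_scaleC_left gg_def)
  also have "\<dots> = phi m a b * cinner x (P (adj (Rm m gg) y))"
    using saP by (simp add: adj_spec[OF bR] sa_def)
  also have "adj (Rm m gg) = op_scale c (Rm m (\<lambda>l. b l - a l))"
    using adj_Rm[OF mk, of gg] mg by (simp add: c_def)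
  also have "phi m a b * cinner x (P (op_scale c (Rm m (\<lambda>l. b l - a l)) y)) =
     (phi m a b * cnj c) * cinner x (Rm m (\<lambda>l. b l - a l) (P y))"
    by (simp add: op_scale_def clinear_scaleC[OF lP] cinner_scaleC_right PR)
  also have "phi m a b * cnj c = cnj (phi m b a)"
  proof -
    have un: "\<And>i j. (i, j) \<in> pairs m \<Longrightarrow> cmod (q i j) = 1" using q_unit2 mk by blast
    have nz: "\<And>i j. (i, j) \<in> pairs m \<Longrightarrow> q i j \<noteq> 0" using q_nzp mk by blast
    have "phi m a b * cnj c = (\<Prod>(i, j)\<in>pairs m. q i j powi ((a i - b i) * b j + - (- (gg i * gg j))))"
      unfolding phi_def c_def by (simp only: pw2_cnj[OF un] pw2_mult[OF nz])
    also have "\<dots> = (\<Prod>(i, j)\<in>pairs m. q i j powi (- ((b i - a i) * a j)))"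
      by (rule pw2_cong) (simp add: gg_def algebra_simps)
    also have "\<dots> = cnj (phi m b a)" unfolding phi_def by (simp only: pw2_cnj[OF un])
    finally show ?thesis .
  qed
  also have "cnj (phi m b a) * cinner x (Rm m (\<lambda>l. b l - a l) (P y)) = cinner x (Kop m P b a y)"
    by (simp add: Kop_def op_scale_def cinner_scaleC_right)
  finally show ?thesis .
qed

lemma phi_Suc:
  "phi (Suc m) a b = phi m a b * (\<Prod>i\<in>{1..m}. q i (Suc m) powi ((a i - b i) * b (Suc m)))"
  unfolding phi_def by (simp add: prod_pairs_Suc)

lemma Kop_0: "Kop 0 P a b = P"
proof -
  have p0: "pairs 0 = {}" by (auto simp: pairs_def)
  show ?thesis by (simp add: Kop_def phi_def p0 Rm_0)
qed

end

context qdc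
begin

lemma Tp_nat: "Tp i (int c) = Ts i ^^ c"
  by (cases "c = 0") (auto simp: op_ipow_def)

lemma Kop_scale: "m \<le> k \<Longrightarrow> bop P \<Longrightarrow> Kop m P a b (scaleC c x) = scaleC c (Kop m P a b x)"
  using lin_Kop clinear_scaleC by blast

lemma Kop_D: "Kop m P a b (Dop j x) = Kop m (P \<circ> Dop j) a b x"
  by (simp add: Kop_def op_scale_def)

lemma q_unit3: "l \<in> {1..m} \<Longrightarrow> Suc m \<le> k \<Longrightarrow> cmod (q l (Suc m)) = 1"
  by (rule circle) (auto simp: pairs_def)

lemma q_nz3: "l \<in> {1..m} \<Longrightarrow> Suc m \<le> k \<Longrightarrow> q l (Suc m) \<noteq> 0"
  by (rule q_nz) (auto simp: pairs_def)

lemma term_T: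
  assumes mk: "Suc m \<le> k" and g: "goodS {1..Suc m} P"
  shows "cinner (Kop m P a b (scaleC (\<Prod>l\<in>{1..m}. q l (Suc m) powi (a l * -1)) (Ts (Suc m) x)))
                (scaleC (\<Prod>l\<in>{1..m}. q l (Suc m) powi (b l * -1)) (Ts (Suc m) y))
         = cinner (Kop m P a b (Aop (Suc m) x)) y"
proof -
  define p where "p = Suc m"
  have p: "p \<in> {1..k}" using mk by (simp add: p_def)
  have bP: "bop P" using g by (simp add: goodS_def)
  have lP: "clinear_op P" using bP bop_clinear by blast
  have m: "m \<le> k" using mk by simp
  have bTp: "bop (Ts p)" using bT p by blast
  have laT: "clinear_op (adj (Ts p))" using bop_adj[OF bTp] bop_clinear by blast
  have cP: "P \<circ> Tp p z = Tp p z \<circ> P" for z using g by (simp add: goodS_def p_def)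
  have cPa: "P (adj (Ts p) u) = adj (Ts p) (P u)" for u using fun_cong[OF cP[of "-1"], of u] by (simp add: Tp_m1)
  define ea where "ea = (\<Prod>l\<in>{1..m}. q l p powi (a l * -1))"
  define eb where "eb = (\<Prod>l\<in>{1..m}. q l p powi (b l * -1))"
  define cg where "cg = (\<Prod>l\<in>{1..m}. q l p powi (a l - b l))"
  define K where "K = Kop m P a b"
  have Ks: "K (scaleC c u) = scaleC c (K u)" for c u unfolding K_def by (rule Kop_scale[OF m bP])
  have step: "adj (Ts p) (K (Ts p x)) = scaleC cg (K (Aop p x))"
  proof -
    have TR: "Tp p (-1) \<circ> Rm m (\<lambda>l. a l - b l) = op_scale cg (Rm m (\<lambda>l. a l - b l) \<circ> Tp p (-1))"
      using Tstar_R[of m p "\<lambda>l. a l - b l"] mk by (simp add: p_def cg_def)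
    have "adj (Ts p) (K (Ts p x)) = scaleC (phi m a b) (adj (Ts p) (Rm m (\<lambda>l. a l - b l) (P (Ts p x))))"
      by (simp add: K_def Kop_def op_scale_def clinear_scaleC[OF laT])
    also have "adj (Ts p) (Rm m (\<lambda>l. a l - b l) (P (Ts p x))) =
               scaleC cg (Rm m (\<lambda>l. a l - b l) (adj (Ts p) (P (Ts p x))))"
      using fun_cong[OF TR, of "P (Ts p x)"] by (simp add: Tp_m1 op_scale_def)
    also have "adj (Ts p) (P (Ts p x)) = P (Aop p x)" by (simp add: cPa Aop_def)
    finally show ?thesis by (simp add: K_def Kop_def op_scale_def scaleC_scaleC mult.commute)
  qed
  have "cinner (K (scaleC ea (Ts p x))) (scaleC eb (Ts p y)) = ea * cnj eb * cinner (K (Ts p x)) (Ts p y)"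
    by (simp add: Ks cinner_scaleC_left cinner_scaleC_right)
  also have "cinner (K (Ts p x)) (Ts p y) = cinner (adj (Ts p) (K (Ts p x))) y"
    by (simp add: adj_spec2[OF bTp])
  also have "\<dots> = cg * cinner (K (Aop p x)) y" by (simp add: step cinner_scaleC_left)
  also have "ea * cnj eb * (cg * cinner (K (Aop p x)) y) = (ea * cnj eb * cg) * cinner (K (Aop p x)) y"
    by simp
  also have "ea * cnj eb * cg = 1"
  proof -
    have un: "\<And>l. l \<in> {1..m} \<Longrightarrow> cmod (q l p) = 1" using q_unit3 mk by (simp add: p_def)
    have nz: "\<And>l. l \<in> {1..m} \<Longrightarrow> q l p \<noteq> 0" using q_nz3 mk by (simp add: p_def)
    have "ea * cnj eb * cg = (\<Prod>l\<in>{1..m}. q l p powi (a l * -1 + - (b l * -1) + (a l - b l)))"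
      unfolding ea_def eb_def cg_def by (simp only: pw_cnj[OF un] pw_mult[OF nz])
    also have "\<dots> = 1" by (rule prod.neutral) simp
    finally show ?thesis .
  qed
  finally show ?thesis by (simp only: K_def ea_def eb_def p_def mult_1_left)
qed

lemma term_M:
  assumes mk: "Suc m \<le> k" and g: "goodS {1..Suc m} P" and ab: "a (Suc m) = b (Suc m) + int c"
  shows "cinner (Kop m P a b (scaleC (\<Prod>l\<in>{1..m}. q l (Suc m) powi (a l * - int c))
                   ((Ts (Suc m) ^^ c) (scaleC (\<Prod>l\<in>{1..m}. q l (Suc m) powi (a l * a (Suc m))) x))))
                (scaleC (\<Prod>l\<in>{1..m}. q l (Suc m) powi (b l * b (Suc m))) y)
         = cinner (Kop (Suc m) P a b x) y"
proof -
  define p where "p = Suc m"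
  have p: "p \<in> {1..k}" using mk by (simp add: p_def)
  have bP: "bop P" using g by (simp add: goodS_def)
  have m: "m \<le> k" using mk by simp
  have bTp: "bop (Ts p)" using bT p by blast
  have lTc: "clinear_op (Ts p ^^ c)" using bop_pow[OF bTp] bop_clinear by blast
  have cPall: "P \<circ> Tp p z = Tp p z \<circ> P" for z using g p by (simp add: goodS_def p_def)
  have cP: "P ((Ts p ^^ c) u) = (Ts p ^^ c) (P u)" for u
    using fun_cong[OF cPall[of "int c"], of u] by (simp add: Tp_nat)
  define e1 where "e1 = (\<Prod>l\<in>{1..m}. q l p powi (a l * - int c))"
  define e2 where "e2 = (\<Prod>l\<in>{1..m}. q l p powi (a l * a p))"
  define e3 where "e3 = (\<Prod>l\<in>{1..m}. q l p powi (b l * b p))"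
  define e4 where "e4 = (\<Prod>l\<in>{1..m}. q l p powi ((a l - b l) * b p))"
  have gp: "(\<lambda>l. a l - b l) p = int c" using ab by (simp add: p_def)
  have "cinner (Kop m P a b (scaleC e1 ((Ts p ^^ c) (scaleC e2 x)))) (scaleC e3 y)
       = e1 * e2 * cnj e3 * cinner (Kop m P a b ((Ts p ^^ c) x)) y"
    by (simp add: Kop_scale[OF m bP] clinear_scaleC[OF lTc] cinner_scaleC_left cinner_scaleC_right)
  also have "e1 * e2 * cnj e3 = e4"
  proof -
    have un: "\<And>l. l \<in> {1..m} \<Longrightarrow> cmod (q l p) = 1" using q_unit3 mk by (simp add: p_def)
    have nz: "\<And>l. l \<in> {1..m} \<Longrightarrow> q l p \<noteq> 0" using q_nz3 mk by (simp add: p_def)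
    have "e1 * e2 * cnj e3 = (\<Prod>l\<in>{1..m}. q l p powi (a l * - int c + a l * a p + - (b l * b p)))"
      unfolding e1_def e2_def e3_def by (simp only: pw_cnj[OF un] pw_mult[OF nz])
    also have "\<dots> = e4" unfolding e4_def
      by (rule pw_cong) (simp add: ab p_def algebra_simps)
    finally show ?thesis .
  qed
  also have "e4 * cinner (Kop m P a b ((Ts p ^^ c) x)) y = cinner (Kop p P a b x) y"
  proof -
    have "Kop p P a b x = scaleC (phi m a b * e4) (Rm m (\<lambda>l. a l - b l) ((Ts p ^^ c) (P x)))"
      unfolding p_def Kop_def by (simp add: phi_Suc Rm_Suc op_scale_def Tp_nat gp[unfolded p_def] e4_def p_def)
    moreover have "Kop m P a b ((Ts p ^^ c) x) = scaleC (phi m a b) (Rm m (\<lambda>l. a l - b l) ((Ts p ^^ c) (P x)))"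
      by (simp add: Kop_def op_scale_def cP)
    ultimately show ?thesis by (simp add: cinner_scaleC_left)
  qed
  finally show ?thesis by (simp add: e1_def e2_def e3_def p_def)
qed

end

context qdc
begin

lemma kernel_step:
  fixes \<sigma> :: "'i \<Rightarrow> nat \<Rightarrow> int" and I :: "'i set" and h :: "'i \<Rightarrow> 'h"
  assumes mk: "Suc m \<le> k" and g: "goodS {1..Suc m} P" and fI: "finite I"
    and IH: "\<And>P' (v :: 'i \<Rightarrow> 'h). goodS {1..m} P' \<Longrightarrow>
               0 \<le> (\<Sum>i\<in>I. \<Sum>j\<in>I. cinner (Kop m P' (\<sigma> i) (\<sigma> j) (v i)) (v j))"
  shows "0 \<le> (\<Sum>i\<in>I. \<Sum>j\<in>I. cinner (Kop (Suc m) P (\<sigma> i) (\<sigma> j) (h i)) (h j))"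
proof (cases "I = {}")
  case True then show ?thesis by simp
next
  case False
  define p where "p = Suc m"
  have m: "m \<le> k" using mk by simp
  have p: "p \<in> {1..k}" using mk p_def by simp
  have bP: "bop P" using g by (simp add: goodS_def)
  have gm: "goodS {1..m} P" by (rule goodS_mono[OF g]) auto
  have gD: "goodS {1..m} (P \<circ> Dop p)"
  proof -
    have "goodS ({1..Suc m} - {Suc m}) (P \<circ> Dop (Suc m))" by (rule goodS_D[OF g]) (use mk in auto)
    moreover have "{1..Suc m} - {Suc m} = {1..m}" by auto
    ultimately show ?thesis by (simp add: p_def)
  qed
  have bTp: "bop (Ts p)" using bT p by blast
  have lT: "clinear_op (Ts p)" using bTp bop_clinear by blast
  define S where "S = (\<lambda>i. \<sigma> i p) ` I"
  have fS: "finite S" "S \<noteq> {}" using fI False by (auto simp: S_def)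
  define L where "L = Min S"
  define N where "N = nat (Max S - L)"
  define \<nu> where "\<nu> i = nat (\<sigma> i p - L)" for i
  have Lle: "L \<le> \<sigma> i p" if "i \<in> I" for i using that fS by (auto simp: L_def S_def)
  have nuN: "\<nu> i \<le> N" if "i \<in> I" for i
  proof -
    have "\<sigma> i p \<le> Max S" using that fS by (auto simp: S_def)
    then have "\<sigma> i p - L \<le> Max S - L" by simp
    then show ?thesis unfolding \<nu>_def N_def by (rule nat_mono)
  qed
  have sig: "\<sigma> i p = L + int (\<nu> i)" if "i \<in> I" for i using Lle[OF that] by (simp add: \<nu>_def)
  define ep where "ep i c = (\<Prod>l\<in>{1..m}. q l p powi (\<sigma> i l * c))" for i c
  define TT :: "('i \<Rightarrow> 'h) \<Rightarrow> ('i \<Rightarrow> 'h)" where "TT v = (\<lambda>i. scaleC (ep i (-1)) (Ts p (v i)))" for v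
  define ff :: "nat \<Rightarrow> ('i \<Rightarrow> 'h)" where
    "ff n = (\<lambda>i. if \<nu> i = n then scaleC (ep i (\<sigma> i p)) (h i) else 0)" for n
  define BB :: "('i \<Rightarrow> 'h) \<Rightarrow> ('i \<Rightarrow> 'h) \<Rightarrow> complex" where
    "BB v w = (\<Sum>i\<in>I. \<Sum>j\<in>I. cinner (Kop m P (\<sigma> i) (\<sigma> j) (v i)) (w j))" for v w
  define X where "X i j = cinner (Kop p P (\<sigma> i) (\<sigma> j) (h i)) (h j)" for i j
  define MM where "MM n n' = (\<Sum>i\<in>I. \<Sum>j\<in>I. if \<nu> i = n \<and> \<nu> j = n' then X i j else 0)" for n n'
  have lK: "clinear_op (Kop m P a b)" for a b using lin_Kop[OF m bP] .
  have nz: "\<And>l. l \<in> {1..m} \<Longrightarrow> q l p \<noteq> 0" using q_nz3 mk by (simp add: p_def)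
  have TTpow: "(TT ^^ c) v = (\<lambda>i. scaleC (ep i (- int c)) ((Ts p ^^ c) (v i)))" for c v
  proof (induction c)
    case 0 show ?case by (simp add: ep_def scaleC_one)
  next
    case (Suc c)
    have e: "ep i (-1) * ep i (- int c) = ep i (-1 - int c)" for i
      unfolding ep_def by (simp only: pw_mult[OF nz]) (rule pw_cong, simp add: algebra_simps)
    have "(TT ^^ Suc c) v = TT ((TT ^^ c) v)" by simp
    also have "\<dots> = TT (\<lambda>i. scaleC (ep i (- int c)) ((Ts p ^^ c) (v i)))" by (simp only: Suc)
    also have "\<dots> = (\<lambda>i. scaleC (ep i (- int (Suc c))) ((Ts p ^^ Suc c) (v i)))"
      by (simp add: TT_def clinear_scaleC[OF lT] scaleC_scaleC e)
    finally show ?case .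
  qed
  have herm: "cinner (Kop m P a b u) w = cnj (cinner (Kop m P b a w) u)" for a b u w
    using K_herm[OF m gm, of a b u w] cinner_commute[of u "Kop m P b a w"] by simp
  have hermX: "X i j = cnj (X j i)" for i j
    using K_herm[OF mk g, of "\<sigma> i" "\<sigma> j" "h i" "h j"] cinner_commute[of "h i"]
    by (simp add: X_def p_def)
  have tele: "0 \<le> (\<Sum>n\<le>N. \<Sum>n'\<le>N. MM n n')"
  proof (rule tele1[where B = BB and T = TT and f = ff])
    fix x y z :: "'i \<Rightarrow> 'h"
    show "BB (x + y) z = BB x z + BB y z"
      by (simp add: BB_def clinear_add[OF lK] cinner_add_left sum.distrib)
    show "BB x (y + z) = BB x y + BB x z"
      by (simp add: BB_def cinner_add_right sum.distrib)
    show "TT (x + y) = TT x + TT y"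
      by (simp add: TT_def fun_eq_iff clinear_add[OF lT] scaleC_add_right)
  next
    fix x y :: "'i \<Rightarrow> 'h"
    have "BB y x = (\<Sum>i\<in>I. \<Sum>j\<in>I. cnj (cinner (Kop m P (\<sigma> j) (\<sigma> i) (x j)) (y i)))"
      unfolding BB_def by (intro sum.cong refl herm)
    also have "\<dots> = (\<Sum>j\<in>I. \<Sum>i\<in>I. cnj (cinner (Kop m P (\<sigma> j) (\<sigma> i) (x j)) (y i)))"
      by (rule sum.swap)
    also have "\<dots> = cnj (BB x y)" by (simp add: BB_def cnj_sum)
    finally show "BB y x = cnj (BB x y)" .
  next
    fix x :: "'i \<Rightarrow> 'h"
    show "0 \<le> BB x x" unfolding BB_def by (rule IH[OF gm])
    have "BB (TT x) (TT x) = (\<Sum>i\<in>I. \<Sum>j\<in>I. cinner (Kop m P (\<sigma> i) (\<sigma> j) (Aop p (x i))) (x j))"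
      unfolding BB_def TT_def ep_def p_def using term_T[OF mk g] by simp
    then have "BB x x - BB (TT x) (TT x) =
       (\<Sum>i\<in>I. \<Sum>j\<in>I. cinner (Kop m P (\<sigma> i) (\<sigma> j) (x i)) (x j) - cinner (Kop m P (\<sigma> i) (\<sigma> j) (Aop p (x i))) (x j))"
      by (simp add: BB_def sum_subtractf[symmetric])
    also have "\<dots> = (\<Sum>i\<in>I. \<Sum>j\<in>I. cinner (Kop m (P \<circ> Dop p) (\<sigma> i) (\<sigma> j) (x i)) (x j))"
      by (intro sum.cong refl) (simp only: Kop_D[symmetric], simp add: Dop_def clinear_diff[OF lK] cinner_diff_left)
    also have "0 \<le> \<dots>" by (rule IH[OF gD])
    finally show "0 \<le> BB x x - BB (TT x) (TT x)" .
  next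
    fix n n' :: nat assume nn: "n' \<le> n"
    define c where "c = n - n'"
    have "BB ((TT ^^ (n - n')) (ff n)) (ff n') =
          (\<Sum>i\<in>I. \<Sum>j\<in>I. cinner (Kop m P (\<sigma> i) (\<sigma> j) (scaleC (ep i (- int c)) ((Ts p ^^ c) (ff n i)))) (ff n' j))"
      by (simp add: BB_def TTpow c_def)
    also have "\<dots> = MM n n'"
      unfolding MM_def
    proof (intro sum.cong refl)
      fix i j assume i: "i \<in> I" and j: "j \<in> I"
      have lTc: "clinear_op (Ts p ^^ c)" using bop_pow[OF bTp] bop_clinear by blast
      show "cinner (Kop m P (\<sigma> i) (\<sigma> j) (scaleC (ep i (- int c)) ((Ts p ^^ c) (ff n i)))) (ff n' j) =
            (if \<nu> i = n \<and> \<nu> j = n' then X i j else 0)"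
      proof (cases "\<nu> i = n \<and> \<nu> j = n'")
        case True
        have ab: "\<sigma> i (Suc m) = \<sigma> j (Suc m) + int c"
          using sig[OF i] sig[OF j] True nn by (simp add: p_def c_def)
        show ?thesis using True term_M[of m P "\<sigma> i" "\<sigma> j" c "h i" "h j", OF mk g ab]
          by (simp add: ff_def ep_def X_def p_def)
      next
        case False
        then show ?thesis
          by (auto simp: ff_def clinear_zero[OF lTc] clinear_zero[OF lK])
      qed
    qed
    finally show "MM n n' = BB ((TT ^^ (n - n')) (ff n)) (ff n')" by simp
  next
    fix n n' :: nat
    have "cnj (MM n n') = (\<Sum>i\<in>I. \<Sum>j\<in>I. if \<nu> i = n \<and> \<nu> j = n' then X j i else 0)"
      unfolding MM_def cnj_sum
    proof (intro sum.cong refl)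
      fix i j show "cnj (if \<nu> i = n \<and> \<nu> j = n' then X i j else 0) = (if \<nu> i = n \<and> \<nu> j = n' then X j i else 0)"
        using hermX[of j i] by simp
    qed
    also have "\<dots> = (\<Sum>j\<in>I. \<Sum>i\<in>I. if \<nu> i = n \<and> \<nu> j = n' then X j i else 0)"
      by (rule sum.swap)
    also have "\<dots> = MM n' n" unfolding MM_def by (intro sum.cong refl) auto
    finally show "MM n' n = cnj (MM n n')" by simp
  qed
  have sw: "(\<Sum>n\<le>N. \<Sum>i\<in>I. \<Sum>j\<in>I. G n i j) = (\<Sum>i\<in>I. \<Sum>j\<in>I. \<Sum>n\<le>N. G n i j)"
    for G :: "nat \<Rightarrow> 'i \<Rightarrow> 'i \<Rightarrow> complex"
  proof -
    have "(\<Sum>n\<le>N. \<Sum>i\<in>I. \<Sum>j\<in>I. G n i j) = (\<Sum>i\<in>I. \<Sum>n\<le>N. \<Sum>j\<in>I. G n i j)" by (rule sum.swap)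
    also have "\<dots> = (\<Sum>i\<in>I. \<Sum>j\<in>I. \<Sum>n\<le>N. G n i j)" by (intro sum.cong refl sum.swap)
    finally show ?thesis .
  qed
  have inner: "(\<Sum>n'\<le>N. MM n n') = (\<Sum>i\<in>I. \<Sum>j\<in>I. if \<nu> i = n then X i j else 0)" for n
  proof -
    have "(\<Sum>n'\<le>N. MM n n') = (\<Sum>i\<in>I. \<Sum>j\<in>I. \<Sum>n'\<le>N. if \<nu> i = n \<and> \<nu> j = n' then X i j else 0)"
      unfolding MM_def by (rule sw)
    also have "\<dots> = (\<Sum>i\<in>I. \<Sum>j\<in>I. if \<nu> i = n then X i j else 0)"
    proof (intro sum.cong refl)
      fix i j assume "i \<in> I" "j \<in> I"
      then have "\<nu> j \<in> {..N}" using nuN by auto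
      then show "(\<Sum>n'\<le>N. if \<nu> i = n \<and> \<nu> j = n' then X i j else 0) = (if \<nu> i = n then X i j else 0)"
        by (cases "\<nu> i = n") auto
    qed
    finally show ?thesis .
  qed
  have eq: "(\<Sum>n\<le>N. \<Sum>n'\<le>N. MM n n') = (\<Sum>i\<in>I. \<Sum>j\<in>I. X i j)"
  proof -
    have "(\<Sum>n\<le>N. \<Sum>n'\<le>N. MM n n') = (\<Sum>n\<le>N. \<Sum>i\<in>I. \<Sum>j\<in>I. if \<nu> i = n then X i j else 0)"
      by (simp add: inner)
    also have "\<dots> = (\<Sum>i\<in>I. \<Sum>j\<in>I. \<Sum>n\<le>N. if \<nu> i = n then X i j else 0)" by (rule sw)
    also have "\<dots> = (\<Sum>i\<in>I. \<Sum>j\<in>I. X i j)"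
    proof (intro sum.cong refl)
      fix i j assume "i \<in> I" "j \<in> I"
      then have "\<nu> i \<in> {..N}" using nuN by auto
      then show "(\<Sum>n\<le>N. if \<nu> i = n then X i j else 0) = X i j" by simp
    qed
    finally show ?thesis .
  qed
  show ?thesis using tele eq by (simp add: X_def p_def)
qed

lemma kernel_pos:
  fixes \<sigma> :: "'i \<Rightarrow> nat \<Rightarrow> int" and I :: "'i set"
  assumes "m \<le> k" "finite I"
  shows "goodS {1..m} P \<Longrightarrow> 0 \<le> (\<Sum>i\<in>I. \<Sum>j\<in>I. cinner (Kop m P (\<sigma> i) (\<sigma> j) (h i)) (h j))"
  using assms(1)
proof (induction m arbitrary: P h)
  case 0
  have bP: "bop P" and pP: "op_pos P" using "0.prems" by (auto simp: goodS_def)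
  have lP: "clinear_op P" using bP bop_clinear by blast
  have "(\<Sum>i\<in>I. \<Sum>j\<in>I. cinner (Kop 0 P (\<sigma> i) (\<sigma> j) (h i)) (h j)) = cinner (P (\<Sum>i\<in>I. h i)) (\<Sum>j\<in>I. h j)"
    by (simp add: Kop_0 clinear_sum[OF lP] cinner_sum_left cinner_sum_right) (rule sum.swap)
  also have "0 \<le> \<dots>" using pP by (simp add: op_pos_def)
  finally show ?case .
next
  case (Suc m)
  show ?case
    by (rule kernel_step[OF Suc.prems(2) Suc.prems(1) assms(2)]) (use Suc.IH Suc.prems in auto)
qed

end

context qdc
begin

lemma term_G:
  fixes s t :: gdc
  shows "cinner (Tdc k q Ts (gdc_mult k (gdc_inv k t) s) x) y =
         cinner (Kop k id (snd s) (snd t) (scaleC (\<Prod>(i, j)\<in>pairs k. q i j powi fst s i j) x))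
                (scaleC (\<Prod>(i, j)\<in>pairs k. q i j powi fst t i j) y)"
proof -
  obtain a al where s: "s = (a, al)" by (cases s)
  obtain b be where t: "t = (b, be)" by (cases t)
  have un: "\<And>i j. (i, j) \<in> pairs k \<Longrightarrow> cmod (q i j) = 1" using circle by blast
  have nz: "\<And>i j. (i, j) \<in> pairs k \<Longrightarrow> q i j \<noteq> 0" using q_nz by blast
  have lR: "clinear_op (Rm k g)" for g by (rule lin_Rm) simp
  define ca where "ca = (\<Prod>(i, j)\<in>pairs k. q i j powi a i j)"
  define cb where "cb = (\<Prod>(i, j)\<in>pairs k. q i j powi b i j)"
  have sn: "snd (gdc_mult k (gdc_inv k t) s) = (\<lambda>l. al l - be l)"
    by (simp add: s t gdc_mult_def gdc_inv_def fun_eq_iff)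
  have fs: "(\<Prod>(i, j)\<in>pairs k. q i j powi fst (gdc_mult k (gdc_inv k t) s) i j) =
            (\<Prod>(i, j)\<in>pairs k. q i j powi (a i j + - b i j + (al i - be i) * be j))"
    unfolding s t gdc_mult_def gdc_inv_def fst_conv snd_conv
    by (rule pw2_cong) (simp add: algebra_simps)
  also have "\<dots> = ca * cnj cb * phi k al be"
    unfolding ca_def cb_def phi_def by (simp only: pw2_cnj[OF un] pw2_mult[OF nz])
  finally have fs': "(\<Prod>(i, j)\<in>pairs k. q i j powi fst (gdc_mult k (gdc_inv k t) s) i j) = ca * cnj cb * phi k al be" .
  have "cinner (Tdc k q Ts (gdc_mult k (gdc_inv k t) s) x) y = (ca * cnj cb * phi k al be) * cinner (Rm k (\<lambda>l. al l - be l) x) y"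
    by (simp add: Tdc_eq fs' sn op_scale_def cinner_scaleC_left)
  also have "\<dots> = cinner (Kop k id al be (scaleC ca x)) (scaleC cb y)"
    by (simp add: Kop_def op_scale_def clinear_scaleC[OF lR] cinner_scaleC_left cinner_scaleC_right)
  finally show ?thesis by (simp add: s t ca_def cb_def)
qed

lemma LHS_true: "positive_definite (gdc_carrier k) (gdc_mult k) (gdc_inv k) (Tdc k q Ts)"
  unfolding positive_definite_def
proof (intro conjI ballI allI impI)
  fix s show "Tdc k q Ts (gdc_inv k s) = adj (Tdc k q Ts s)" by (rule Tdc_inv)
next
  fix F :: "gdc set" and h :: "gdc \<Rightarrow> 'h"
  assume fF: "finite F"
  define h' where "h' s = scaleC (\<Prod>(i, j)\<in>pairs k. q i j powi fst s i j) (h s)" for s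
  have "(\<Sum>s\<in>F. \<Sum>t\<in>F. cinner (Tdc k q Ts (gdc_mult k (gdc_inv k t) s) (h s)) (h t)) =
        (\<Sum>s\<in>F. \<Sum>t\<in>F. cinner (Kop k id (snd s) (snd t) (h' s)) (h' t))"
    by (simp add: term_G h'_def)
  also have "0 \<le> \<dots>" by (rule kernel_pos[OF order_refl fF goodS_id])
  finally show "0 \<le> (\<Sum>s\<in>F. \<Sum>t\<in>F. cinner (Tdc k q Ts (gdc_mult k (gdc_inv k t) s) (h s)) (h t))" .
qed

end

theorem theorem3p2:
  fixes k :: nat
    and Ts :: "nat \<Rightarrow> ('h::chilbert_space \<Rightarrow> 'h)"
    and q :: "nat \<Rightarrow> nat \<Rightarrow> complex"
  assumes contr: "\<And>i. i \<in> {1..k} \<Longrightarrow> contraction (Ts i)"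
    and circle: "\<And>i j. (i, j) \<in> pairs k \<Longrightarrow> cmod (q i j) = 1"
    and comm: "\<And>i j. (i, j) \<in> pairs k \<Longrightarrow> Ts i \<circ> Ts j = op_scale (q i j) (Ts j \<circ> Ts i)"
    and dcomm: "\<And>i j. (i, j) \<in> pairs k \<Longrightarrow>
                  Ts i \<circ> adj (Ts j) = op_scale (cnj (q i j)) (adj (Ts j) \<circ> Ts i)"
  shows "positive_definite (gdc_carrier k) (gdc_mult k) (gdc_inv k) (Tdc k q Ts) \<longleftrightarrow>
         (\<forall>u. u \<subseteq> {1..k} \<longrightarrow> op_pos (Sop k q Ts u))"
proof -
  interpret qdc k Ts q
    using contr circle comm dcomm by unfold_locales auto
  show ?thesis using LHS_true RHS_true by blast
qed

end
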